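(* Let $G$ be a finite multigraph (no loops), let $\ell \geq 4$ be an integer, let $s$ be a vertex of $G$, and let $A \subsetneq V(G)$ with $s \notin A$ be such that $\lambda_G(x,y) \geq \ell$ for any two distinct $x,y\in A$ and such that no edge of $G$ has both endvertices outside $A$. If $\deg(s) = 4$, then $L(G,s,\tau_A)$ is one of: $K_4$, $K_{2,2}$, or the disjoint union of two edges. The last case can hold only if $\ell$ is odd.
   Context: $\lambda_G(x,y)$ is the maximum number of pairwise edge-disjoint $x$–$y$ paths in $G$. Lifting two distinct edges $sx,sy$ means deleting them and adding a new edge $xy$. The target function $\tau_A$ assigns $\ell$ to pairs of vertices both in $A$ and $0$ otherwise; a pair of edges at $s$ is $\tau_A$-admissible if after lifting them the new graph $G'$ satisfies $\lambda_{G'}(x,y)\ge\tau_A(x,y)$ for all distinct $x,y\in V(G)\setminus\{s\}$. The lifting graph $L(G,s,\tau_A)$ has as vertices the edges incident with $s$, two being adjacent iff they form a $\tau_A$-admissible pair. *)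

theory Defs
  imports Main
begin

text \<open>Parallel edges are distinct edge names with equal endpoints.\<close>

definition multigraph :: "'v set \<Rightarrow> 'e set \<Rightarrow> ('e \<Rightarrow> 'v set) \<Rightarrow> bool" where
  "multigraph V E ends \<longleftrightarrow> finite V \<and> finite E \<and>
     (\<forall>e\<in>E. ends e \<subseteq> V \<and> card (ends e) = 2)"

definition is_path :: "'v set \<Rightarrow> 'e set \<Rightarrow> ('e \<Rightarrow> 'v set) \<Rightarrow> 'v \<Rightarrow> 'v \<Rightarrow> 'v list \<Rightarrow> 'e list \<Rightarrow> bool" where
  "is_path V E ends x y vs es \<longleftrightarrow>
     vs \<noteq> [] \<and> hd vs = x \<and> last vs = y \<and> distinct vs \<and> set vs \<subseteq> V \<and>
     length es + 1 = length vs \<and> set es \<subseteq> E \<and>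
     (\<forall>i < length es. ends (es ! i) = {vs ! i, vs ! Suc i})"

definition has_disjoint_paths :: "'v set \<Rightarrow> 'e set \<Rightarrow> ('e \<Rightarrow> 'v set) \<Rightarrow> 'v \<Rightarrow> 'v \<Rightarrow> nat \<Rightarrow> bool" where
  "has_disjoint_paths V E ends x y k \<longleftrightarrow>
     (\<exists>P :: nat \<Rightarrow> 'v list \<times> 'e list.
        (\<forall>i<k. is_path V E ends x y (fst (P i)) (snd (P i))) \<and>
        (\<forall>i<k. \<forall>j<k. i \<noteq> j \<longrightarrow> set (snd (P i)) \<inter> set (snd (P j)) = {}))"

definition edge_conn :: "'v set \<Rightarrow> 'e set \<Rightarrow> ('e \<Rightarrow> 'v set) \<Rightarrow> 'v \<Rightarrow> 'v \<Rightarrow> nat" where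
  "edge_conn V E ends x y = Sup {k. has_disjoint_paths V E ends x y k}"

definition incident_edges :: "'e set \<Rightarrow> ('e \<Rightarrow> 'v set) \<Rightarrow> 'v \<Rightarrow> 'e set" where
  "incident_edges E ends s = {e\<in>E. s \<in> ends e}"

definition other_end :: "('e \<Rightarrow> 'v set) \<Rightarrow> 'v \<Rightarrow> 'e \<Rightarrow> 'v" where
  "other_end ends s e = (THE x. ends e = {s, x})"

text \<open>We reuse the name e1 for the new edge (so the result has edge set E - {e2}
  and e1 now has endpoints {x,y}); this is isomorphic to the graph described in the paper.
  If x = y the new edge is a loop, which does not affect any path.\<close>

definition lift_edges :: "'e set \<Rightarrow> ('e \<Rightarrow> 'v set) \<Rightarrow> 'v \<Rightarrow> 'e \<Rightarrow> 'e \<Rightarrow> 'e set \<times> ('e \<Rightarrow> 'v set)" where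
  "lift_edges E ends s e1 e2 =
     (E - {e2}, ends(e1 := {other_end ends s e1, other_end ends s e2}))"

definition tau :: "'v set \<Rightarrow> nat \<Rightarrow> 'v \<Rightarrow> 'v \<Rightarrow> nat" where
  "tau A l x y = (if x \<in> A \<and> y \<in> A then l else 0)"

definition admissible :: "'v set \<Rightarrow> 'e set \<Rightarrow> ('e \<Rightarrow> 'v set) \<Rightarrow> 'v \<Rightarrow> 'v set \<Rightarrow> nat \<Rightarrow> 'e \<Rightarrow> 'e \<Rightarrow> bool" where
  "admissible V E ends s A l e1 e2 \<longleftrightarrow>
     e1 \<in> incident_edges E ends s \<and> e2 \<in> incident_edges E ends s \<and> e1 \<noteq> e2 \<and>
     (let (E', ends') = lift_edges E ends s e1 e2 in
       \<forall>x\<in>V - {s}. \<forall>y\<in>V - {s}. x \<noteq> y \<longrightarrow> edge_conn V E' ends' x y \<ge> tau A l x y)"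

definition is_K4 :: "'a set \<Rightarrow> ('a \<Rightarrow> 'a \<Rightarrow> bool) \<Rightarrow> bool" where
  "is_K4 D R \<longleftrightarrow> card D = 4 \<and> (\<forall>a\<in>D. \<forall>b\<in>D. a \<noteq> b \<longrightarrow> R a b)"

definition is_K22 :: "'a set \<Rightarrow> ('a \<Rightarrow> 'a \<Rightarrow> bool) \<Rightarrow> bool" where
  "is_K22 D R \<longleftrightarrow> (\<exists>a b c d. distinct [a, b, c, d] \<and> D = {a, b, c, d} \<and>
     (\<forall>u\<in>D. \<forall>v\<in>D. u \<noteq> v \<longrightarrow>
        (R u v \<longleftrightarrow> \<not> ({u, v} = {a, b} \<or> {u, v} = {c, d}))))"

definition is_2K2 :: "'a set \<Rightarrow> ('a \<Rightarrow> 'a \<Rightarrow> bool) \<Rightarrow> bool" where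
  "is_2K2 D R \<longleftrightarrow> (\<exists>a b c d. distinct [a, b, c, d] \<and> D = {a, b, c, d} \<and>
     (\<forall>u\<in>D. \<forall>v\<in>D. u \<noteq> v \<longrightarrow>
        (R u v \<longleftrightarrow> ({u, v} = {a, b} \<or> {u, v} = {c, d}))))"

end

theory Submission
  imports Defs
begin

definition dc :: "'e set \<Rightarrow> ('e \<Rightarrow> 'v set) \<Rightarrow> 'v set \<Rightarrow> nat" where
  "dc E ends S = card {e\<in>E. ends e \<inter> S \<noteq> {} \<and> ends e - S \<noteq> {}}"

lemma card2_eq: "finite T \<Longrightarrow> card T \<le> 2 \<Longrightarrow> a \<in> T \<Longrightarrow> b \<in> T \<Longrightarrow> a \<noteq> b \<Longrightarrow> T = {a,b}"
proof (rule ccontr)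
  assume f: "finite T" and c: "card T \<le> 2" and ab: "a \<in> T" "b \<in> T" "a \<noteq> b" and ne: "T \<noteq> {a,b}"
  then obtain c where "c \<in> T" "c \<noteq> a" "c \<noteq> b" by blast
  then have "{a,b,c} \<subseteq> T" using ab by auto
  then have "card {a,b,c} \<le> card T" using f card_mono by blast
  moreover have "card {a,b,c} = 3" using ab \<open>c \<noteq> a\<close> \<open>c \<noteq> b\<close> by auto
  ultimately show False using c by simp
qed

lemma is_pathD:
  assumes "is_path V E ends x y vs es"
  shows "vs \<noteq> []" "hd vs = x" "last vs = y" "distinct vs" "set vs \<subseteq> V"
    "length es + 1 = length vs" "set es \<subseteq> E"
    "\<And>i. i < length es \<Longrightarrow> ends (es ! i) = {vs ! i, vs ! Suc i}"
  using assms unfolding is_path_def by auto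

lemma cross_index: "vs \<noteq> [] \<Longrightarrow> hd vs \<in> S \<Longrightarrow> last vs \<notin> S \<Longrightarrow>
   \<exists>j. Suc j < length vs \<and> vs!j \<in> S \<and> vs!Suc j \<notin> S"
proof (induction vs)
  case Nil then show ?case by simp
next
  case (Cons a vs)
  show ?case
  proof (cases "vs = []")
    case True then show ?thesis using Cons by simp
  next
    case False
    show ?thesis
    proof (cases "hd vs \<in> S")
      case True
      then obtain j where "Suc j < length vs" "vs!j \<in> S" "vs!Suc j \<notin> S"
        using Cons False by auto
      then show ?thesis by (intro exI[of _ "Suc j"]) auto
    next
      case f2: False
      then show ?thesis using Cons False by (intro exI[of _ 0]) (auto simp: hd_conv_nth)
    qed
  qed
qed

lemma path_crosses:
  assumes "is_path V E ends x y vs es" "x \<in> S" "y \<notin> S"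
  shows "\<exists>e\<in>set es. e \<in> {e\<in>E. ends e \<inter> S \<noteq> {} \<and> ends e - S \<noteq> {}}"
proof -
  note D = is_pathD[OF assms(1)]
  from assms obtain j where j: "Suc j < length vs" "vs!j \<in> S" "vs!Suc j \<notin> S"
    using cross_index[of vs S] D(1-3) by auto
  have jl: "j < length es" using j D(6) by auto
  then have "ends (es!j) = {vs!j, vs!Suc j}" using D(8) by auto
  moreover have "es!j \<in> set es" using jl by simp
  moreover have "es!j \<in> E" using jl D(7) by auto
  ultimately show ?thesis using j by (intro bexI[of _ "es!j"]) auto
qed

lemma easy:
  assumes "finite E" "has_disjoint_paths V E ends x y k" "x \<in> S" "y \<notin> S"
  shows "k \<le> dc E ends S"
proof -
  let ?C = "{e\<in>E. ends e \<inter> S \<noteq> {} \<and> ends e - S \<noteq> {}}"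
  obtain P where P: "\<forall>i<k. is_path V E ends x y (fst (P i)) (snd (P i))"
    "\<forall>i<k. \<forall>j<k. i \<noteq> j \<longrightarrow> set (snd (P i)) \<inter> set (snd (P j)) = {}"
    using assms(2) unfolding has_disjoint_paths_def by blast
  have "\<forall>i\<in>{..<k}. \<exists>e. e \<in> set (snd (P i)) \<and> e \<in> ?C"
  proof
    fix i assume "i \<in> {..<k}"
    then have "is_path V E ends x y (fst (P i)) (snd (P i))" using P(1) by simp
    from path_crosses[OF this assms(3,4)] show "\<exists>e. e \<in> set (snd (P i)) \<and> e \<in> ?C" by blast
  qed
  from bchoice[OF this] obtain f where f0: "\<forall>i\<in>{..<k}. f i \<in> set (snd (P i)) \<and> f i \<in> ?C" by blast
  then have f: "\<forall>i<k. f i \<in> set (snd (P i)) \<and> f i \<in> ?C" by simp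
  have inj: "inj_on f {..<k}"
  proof (rule inj_onI)
    fix i j assume "i \<in> {..<k}" "j \<in> {..<k}" "f i = f j"
    then show "i = j" using f P(2) by (metis disjoint_iff lessThan_iff)
  qed
  have "f ` {..<k} \<subseteq> ?C" using f by auto
  moreover have "finite ?C" using assms(1) by simp
  ultimately have "card (f ` {..<k}) \<le> card ?C" by (rule card_mono[rotated])
  then show ?thesis using inj card_image unfolding dc_def by fastforce
qed

lemma is_path_mono: "is_path V E' ends x y vs es \<Longrightarrow> E' \<subseteq> E \<Longrightarrow> is_path V E ends x y vs es"
  unfolding is_path_def by auto

lemma hdp_mono: assumes "has_disjoint_paths V E' ends x y k" "E' \<subseteq> E" shows "has_disjoint_paths V E ends x y k"
proof -
  obtain P where P: "\<forall>i<k. is_path V E' ends x y (fst (P i)) (snd (P i))"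
    "\<forall>i<k. \<forall>j<k. i \<noteq> j \<longrightarrow> set (snd (P i)) \<inter> set (snd (P j)) = {}"
    using assms(1) unfolding has_disjoint_paths_def by blast
  have "\<forall>i<k. is_path V E ends x y (fst (P i)) (snd (P i))"
  proof (intro allI impI)
    fix i assume "i < k"
    then have "is_path V E' ends x y (fst (P i)) (snd (P i))" using P(1) by simp
    then show "is_path V E ends x y (fst (P i)) (snd (P i))" using is_path_mono assms(2) by metis
  qed
  then show ?thesis using P(2) unfolding has_disjoint_paths_def by blast
qed

lemma hdp_add:
  assumes "has_disjoint_paths V E' ends x y k" "is_path V E ends x y vs es" "set es \<inter> E' = {}" "E' \<subseteq> E"
  shows "has_disjoint_paths V E ends x y (Suc k)"
proof -
  obtain P where P: "\<forall>i<k. is_path V E' ends x y (fst (P i)) (snd (P i))"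
    "\<forall>i<k. \<forall>j<k. i \<noteq> j \<longrightarrow> set (snd (P i)) \<inter> set (snd (P j)) = {}"
    using assms(1) unfolding has_disjoint_paths_def by blast
  define Q where "Q = (\<lambda>i. if i < k then P i else (vs, es))"
  have Q1: "\<forall>i<Suc k. is_path V E ends x y (fst (Q i)) (snd (Q i))"
  proof (intro allI impI)
    fix i assume "i < Suc k"
    show "is_path V E ends x y (fst (Q i)) (snd (Q i))"
    proof (cases "i < k")
      case True
      then have "is_path V E' ends x y (fst (P i)) (snd (P i))" using P(1) by simp
      then show ?thesis using True assms(4) unfolding Q_def is_path_def by auto
    next
      case False then show ?thesis using assms(2) unfolding Q_def by simp
    qed
  qed
  have sub: "\<And>i. i < k \<Longrightarrow> set (snd (P i)) \<subseteq> E'"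
    using P(1) unfolding is_path_def by blast
  have sub': "\<forall>i<k. set (snd (P i)) \<inter> set es = {}" using sub assms(3) by blast
  have Q2: "\<forall>i<Suc k. \<forall>j<Suc k. i \<noteq> j \<longrightarrow> set (snd (Q i)) \<inter> set (snd (Q j)) = {}"
  proof (intro allI impI)
    fix i j assume "i < Suc k" "j < Suc k" "i \<noteq> j"
    then show "set (snd (Q i)) \<inter> set (snd (Q j)) = {}"
      using P(2) sub' unfolding Q_def by (cases "i < k"; cases "j < k") (auto simp: Int_commute)
  qed
  show ?thesis unfolding has_disjoint_paths_def using Q1 Q2 by blast
qed

lemma dc_remove:
  assumes "finite E"
  shows "dc E ends S = dc (E - {e}) ends S + (if e \<in> E \<and> ends e \<inter> S \<noteq> {} \<and> ends e - S \<noteq> {} then 1 else 0)"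
proof -
  let ?C = "{e\<in>E. ends e \<inter> S \<noteq> {} \<and> ends e - S \<noteq> {}}"
  have eq: "{e'\<in>E - {e}. ends e' \<inter> S \<noteq> {} \<and> ends e' - S \<noteq> {}} = ?C - {e}" by auto
  have fin: "finite ?C" using assms by simp
  show ?thesis
  proof (cases "e \<in> ?C")
    case True
    then show ?thesis unfolding dc_def eq using card_Suc_Diff1[OF fin True] by simp
  next
    case False
    then have "?C - {e} = ?C" by blast
    then show ?thesis unfolding dc_def eq using False by simp
  qed
qed

lemma hdp_zero: "has_disjoint_paths V E ends x y 0"
  unfolding has_disjoint_paths_def by simp

lemma glue_path:
  assumes l1: "length es1 + 1 = length vs1" and l2: "length es2 + 1 = length vs2"
    and ne1: "es1 \<noteq> []" and ne2: "es2 \<noteq> []"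
    and hx: "hd vs1 = x" and ly: "last vs2 = y"
    and d1: "distinct (butlast vs1)" and d2: "distinct (tl vs2)"
    and dj: "set (butlast vs1) \<inter> set (tl vs2) = {}"
    and V1: "set (butlast vs1) \<subseteq> V" and V2: "set (tl vs2) \<subseteq> V"
    and E1: "set es1 \<subseteq> E" and E2: "set es2 \<subseteq> E"
    and c1: "\<And>i. Suc i < length es1 \<Longrightarrow> ends (es1!i) = {vs1!i, vs1!Suc i}"
    and c2: "\<And>i. 0 < i \<Longrightarrow> i < length es2 \<Longrightarrow> ends (es2!i) = {vs2!i, vs2!Suc i}"
    and m: "last es1 = hd es2" and mc: "ends (hd es2) = {vs1!(length es1 - 1), vs2!1}"
  shows "is_path V E ends x y (butlast vs1 @ tl vs2) (es1 @ tl es2)"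
proof -
  define n1 where "n1 = length es1"
  define n2 where "n2 = length es2"
  have n1p: "n1 \<ge> 1" using ne1 n1_def by (cases es1) auto
  have n2p: "n2 \<ge> 1" using ne2 n2_def by (cases es2) auto
  have lb: "length (butlast vs1) = n1" using l1 n1_def by simp
  have lt: "length (tl vs2) = n2" using l2 n2_def by simp
  have lte: "length (tl es2) = n2 - 1" using n2_def by simp
  let ?vs = "butlast vs1 @ tl vs2" and ?es = "es1 @ tl es2"
  have bne: "butlast vs1 \<noteq> []" using lb n1p by (metis length_0_conv not_one_le_zero)
  have "?vs \<noteq> []" using bne by simp
  moreover have "hd ?vs = x"
  proof -
    have "butlast vs1 \<noteq> []" using bne .
    then have "hd ?vs = hd (butlast vs1)" by simp
    also have "\<dots> = hd vs1" using \<open>butlast vs1 \<noteq> []\<close> by (metis append_butlast_last_id butlast.simps(1) hd_append2)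
    finally show ?thesis using hx by simp
  qed
  moreover have "last ?vs = y"
  proof -
    have "tl vs2 \<noteq> []" using lt n2p by (metis length_0_conv not_one_le_zero)
    then have "last ?vs = last (tl vs2)" by simp
    also have "\<dots> = last vs2" using \<open>tl vs2 \<noteq> []\<close> by (metis last_tl)
    finally show ?thesis using ly by simp
  qed
  moreover have "distinct ?vs" using d1 d2 dj by simp
  moreover have "set ?vs \<subseteq> V" using V1 V2 by simp
  moreover have "length ?es + 1 = length ?vs" using lb lt lte n1_def n2p by simp
  moreover have "set ?es \<subseteq> E" using E1 E2 by (auto dest: list.set_sel(2)[OF ne2])
  moreover have "\<forall>i < length ?es. ends (?es ! i) = {?vs ! i, ?vs ! Suc i}"
  proof (intro allI impI)
    fix i assume il: "i < length ?es"
    then have il': "i < n1 + n2 - 1" using n1_def lte n2p by simp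
    consider (a) "Suc i < n1" | (b) "Suc i = n1" | (c) "n1 \<le> i" by linarith
    then show "ends (?es ! i) = {?vs ! i, ?vs ! Suc i}"
    proof cases
      case a
      have e: "?es ! i = es1 ! i" using a n1_def by (simp add: nth_append)
      have v1: "?vs ! i = vs1 ! i" using a lb by (simp add: nth_append nth_butlast)
      have v2: "?vs ! Suc i = vs1 ! Suc i" using a lb by (simp add: nth_append nth_butlast)
      show ?thesis using c1 a n1_def e v1 v2 by simp
    next
      case b
      have ii: "i = length es1 - 1" using b n1_def by simp
      have e: "?es ! i = last es1" using b n1_def ne1 by (simp add: nth_append last_conv_nth ii)
      have ii2: "n1 - 1 = i" using b by simp
      have v1: "?vs ! i = vs1 ! i" using b lb by (simp add: nth_append nth_butlast)
      have v2: "?vs ! Suc i = vs2 ! 1" using b lb lt n2p by (simp add: nth_append nth_tl)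
      show ?thesis using mc m e v1 v2 ii by simp
    next
      case c
      define j where "j = i - n1 + 1"
      have j0: "0 < j" "j < n2" using j_def c il' by auto
      have e: "?es ! i = es2 ! j" using c n1_def j_def j0 lte by (simp add: nth_append nth_tl)
      have v1: "?vs ! i = vs2 ! j" using c lb lt j_def j0 by (simp add: nth_append nth_tl)
      have v2: "?vs ! Suc i = vs2 ! Suc j" using c lb lt j_def j0 il' by (simp add: nth_append nth_tl Suc_diff_le)
      show ?thesis using c2[of j] j0 n2_def e v1 v2 by simp
    qed
  qed
  ultimately show ?thesis unfolding is_path_def by blast
qed

lemma img_id_on: "(\<forall>w\<in>T. f w = w) \<Longrightarrow> f ` T = T"
  by force

lemma ps1:
  assumes p: "is_path (insert y S) {e\<in>E. ends e \<inter> S \<noteq> {}} (\<lambda>e. (\<lambda>w. if w \<in> S then w else y) ` ends e) x y vs es"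
    and xS: "x \<in> S" and yS: "y \<notin> S"
    and ed: "\<forall>e\<in>E. finite (ends e) \<and> card (ends e) \<le> 2"
  shows "es \<noteq> []" "set (butlast vs) \<subseteq> S"
    "\<And>i. Suc i < length es \<Longrightarrow> ends (es!i) = {vs!i, vs!Suc i}"
    "vs!(length es - 1) \<in> S" "\<exists>w. w \<notin> S \<and> ends (last es) = {vs!(length es - 1), w}"
    "\<forall>e\<in>set es. ends e \<inter> S \<noteq> {} \<and> e \<in> E"
proof -
  let ?f = "\<lambda>w. if w \<in> S then w else y"
  note D = is_pathD[OF p]
  have lv: "length vs = length es + 1" using D(6) by simp
  have lastv: "vs ! length es = y" using D(1,3) lv by (metis add_diff_cancel_right' last_conv_nth)
  have inS: "\<And>j. j < length es \<Longrightarrow> vs!j \<in> S"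
  proof -
    fix j assume j: "j < length es"
    have "vs!j \<in> insert y S" using D(5) j lv by (metis add.commute less_Suc_eq nth_mem plus_1_eq_Suc subsetD)
    moreover have "vs!j \<noteq> y" using D(4) j lv lastv by (metis less_add_one nat_neq_iff nth_eq_iff_index_eq order_less_trans)
    ultimately show "vs!j \<in> S" by simp
  qed
  show ne: "es \<noteq> []"
  proof
    assume "es = []"
    then have "vs!0 = y" using lastv by simp
    moreover have "vs!0 = x" using D(1,2) by (simp add: hd_conv_nth)
    ultimately show False using xS yS by simp
  qed
  show "set (butlast vs) \<subseteq> S"
  proof
    fix v assume "v \<in> set (butlast vs)"
    then obtain j where "j < length (butlast vs)" "butlast vs ! j = v" by (metis in_set_conv_nth)
    then show "v \<in> S" using inS lv by (auto simp: nth_butlast)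
  qed
  have eE: "\<forall>e\<in>set es. ends e \<inter> S \<noteq> {} \<and> e \<in> E" using D(7) by auto
  then show "\<forall>e\<in>set es. ends e \<inter> S \<noteq> {} \<and> e \<in> E" .
  show "\<And>i. Suc i < length es \<Longrightarrow> ends (es!i) = {vs!i, vs!Suc i}"
  proof -
    fix i assume i: "Suc i < length es"
    have e1: "?f ` ends (es!i) = {vs!i, vs!Suc i}" using D(8) i by simp
    have s1: "{vs!i, vs!Suc i} \<subseteq> S" using inS i by simp
    have sub: "ends (es!i) \<subseteq> S"
    proof
      fix w assume "w \<in> ends (es!i)"
      then have "?f w \<in> {vs!i, vs!Suc i}" using e1 by blast
      then show "w \<in> S" using s1 yS by (cases "w \<in> S") auto
    qed
    then have "?f ` ends (es!i) = ends (es!i)" by (intro img_id_on) auto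
    then show "ends (es!i) = {vs!i, vs!Suc i}" using e1 by simp
  qed
  define i where "i = length es - 1"
  have il: "i < length es" using ne i_def by (cases es) auto
  have si: "Suc i = length es" using ne i_def by (cases es) auto
  show uS: "vs!(length es - 1) \<in> S" using inS il i_def by simp
  have e1: "?f ` ends (es!i) = {vs!i, y}" using D(8) il si lastv by simp
  have la: "last es = es!i" using ne i_def by (simp add: last_conv_nth)
  have "vs!i \<in> ?f ` ends (es!i)" using e1 by simp
  then have "\<exists>u\<in>ends (es!i). vs!i = ?f u" by (simp only: image_iff)
  then obtain u where u: "u \<in> ends (es!i)" "?f u = vs!i" by metis
  have uu: "u = vs!i" using u uS i_def yS by (cases "u \<in> S") auto
  have "y \<in> ?f ` ends (es!i)" using e1 by simp
  then have "\<exists>w\<in>ends (es!i). y = ?f w" by (simp only: image_iff)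
  then obtain w where w: "w \<in> ends (es!i)" "?f w = y" by metis
  have wS: "w \<notin> S" using w yS by (cases "w \<in> S") auto
  have fin: "finite (ends (es!i))" "card (ends (es!i)) \<le> 2" using ed eE il by (meson nth_mem)+
  have "ends (es!i) = {vs!i, w}" using card2_eq[OF fin] u(1) uu w(1) wS uS i_def by metis
  then show "\<exists>w. w \<notin> S \<and> ends (last es) = {vs!(length es - 1), w}" using wS la i_def by auto
qed

lemma ps2:
  assumes p: "is_path (insert x (V - S)) {e\<in>E. ends e - S \<noteq> {}} (\<lambda>e. (\<lambda>w. if w \<in> S then x else w) ` ends e) x y vs es"
    and xS: "x \<in> S" and yS: "y \<notin> S"
    and ed: "\<forall>e\<in>E. finite (ends e) \<and> card (ends e) \<le> 2"
  shows "es \<noteq> []" "set (tl vs) \<subseteq> V - S"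
    "\<And>i. 0 < i \<Longrightarrow> i < length es \<Longrightarrow> ends (es!i) = {vs!i, vs!Suc i} \<and> ends (es!i) \<inter> S = {}"
    "vs!1 \<notin> S" "\<exists>u. u \<in> S \<and> ends (hd es) = {u, vs!1}"
    "\<forall>e\<in>set es. e \<in> E"
proof -
  let ?f = "\<lambda>w. if w \<in> S then x else w"
  note D = is_pathD[OF p]
  have lv: "length vs = length es + 1" using D(6) by simp
  have lastv: "vs ! length es = y" using D(1,3) lv by (metis add_diff_cancel_right' last_conv_nth)
  have v0: "vs!0 = x" using D(1,2) by (simp add: hd_conv_nth)
  have inS: "\<And>j. 0 < j \<Longrightarrow> j < length vs \<Longrightarrow> vs!j \<in> V - S"
  proof -
    fix j assume j: "0 < j" "j < length vs"
    have "vs!j \<in> insert x (V - S)" using D(5) j by (metis nth_mem subsetD)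
    moreover have "vs!j \<noteq> x" using D(4) j v0 nth_eq_iff_index_eq[of vs j 0] by (metis gr_implies_not0 order.strict_trans)
    ultimately show "vs!j \<in> V - S" by simp
  qed
  show ne: "es \<noteq> []"
  proof
    assume "es = []"
    then have "vs!0 = y" using lastv by simp
    then show False using v0 xS yS by simp
  qed
  show "set (tl vs) \<subseteq> V - S"
  proof
    fix v assume "v \<in> set (tl vs)"
    then obtain j where "j < length (tl vs)" "tl vs ! j = v" by (metis in_set_conv_nth)
    then show "v \<in> V - S" using inS[of "Suc j"] lv by (auto simp: nth_tl)
  qed
  show "\<forall>e\<in>set es. e \<in> E" using D(7) by auto
  then have eE: "\<forall>e\<in>set es. e \<in> E" .
  show "\<And>i. 0 < i \<Longrightarrow> i < length es \<Longrightarrow> ends (es!i) = {vs!i, vs!Suc i} \<and> ends (es!i) \<inter> S = {}"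
  proof -
    fix i assume i: "0 < i" "i < length es"
    have e1: "?f ` ends (es!i) = {vs!i, vs!Suc i}" using D(8) i by simp
    have s1: "{vs!i, vs!Suc i} \<subseteq> V - S" using inS i lv by simp
    have sub: "ends (es!i) \<inter> S = {}"
    proof (rule ccontr)
      assume "ends (es!i) \<inter> S \<noteq> {}"
      then obtain w where "w \<in> ends (es!i)" "w \<in> S" by blast
      then have "x \<in> {vs!i, vs!Suc i}" using e1 by force
      then show False using s1 xS by blast
    qed
    then have "?f ` ends (es!i) = ends (es!i)" by (intro img_id_on) auto
    then show "ends (es!i) = {vs!i, vs!Suc i} \<and> ends (es!i) \<inter> S = {}" using e1 sub by simp
  qed
  have l1: "1 < length vs" using ne lv by (cases es) auto
  show v1S: "vs!1 \<notin> S" using inS[of 1] l1 by simp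
  have e1: "?f ` ends (es!0) = {x, vs!1}" using D(8)[of 0] ne v0 by simp
  have la: "hd es = es!0" using ne by (simp add: hd_conv_nth)
  have "x \<in> ?f ` ends (es!0)" using e1 by simp
  then have "\<exists>u\<in>ends (es!0). x = ?f u" by (simp only: image_iff)
  then obtain u where u: "u \<in> ends (es!0)" "?f u = x" by metis
  have uS: "u \<in> S" using u xS by (cases "u \<in> S") auto
  have "vs!1 \<in> ?f ` ends (es!0)" using e1 by simp
  then have "\<exists>w\<in>ends (es!0). vs!1 = ?f w" by (simp only: image_iff)
  then obtain w where w: "w \<in> ends (es!0)" "?f w = vs!1" by metis
  have ww: "w = vs!1" using w v1S xS by (cases "w \<in> S") auto
  have fin: "finite (ends (es!0))" "card (ends (es!0)) \<le> 2" using ed eE ne by (meson nth_mem length_greater_0_conv)+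
  have "ends (es!0) = {u, vs!1}" using card2_eq[OF fin] u(1) uS w(1) ww v1S by metis
  then show "\<exists>u. u \<in> S \<and> ends (hd es) = {u, vs!1}" using uS la by auto
qed

lemma pair_eq_split: "{a,b} = {c,d} \<Longrightarrow> a \<in> S \<Longrightarrow> c \<in> S \<Longrightarrow> b \<notin> S \<Longrightarrow> d \<notin> S \<Longrightarrow> b = d"
  by (metis doubleton_eq_iff)

lemma set_tl_sub: "set (tl xs) \<subseteq> set xs" by (cases xs) auto

lemma glue_case:
  assumes fE: "finite E" and ed: "\<forall>e\<in>E. finite (ends e) \<and> card (ends e) \<le> 2"
    and xS: "x \<in> S" and yS: "y \<notin> S" and SV: "S \<subseteq> V"
    and tight: "dc E ends S = k"
    and H1: "has_disjoint_paths (insert y S) {e\<in>E. ends e \<inter> S \<noteq> {}} (\<lambda>e. (\<lambda>w. if w \<in> S then w else y) ` ends e) x y k"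
    and H2: "has_disjoint_paths (insert x (V - S)) {e\<in>E. ends e - S \<noteq> {}} (\<lambda>e. (\<lambda>w. if w \<in> S then x else w) ` ends e) x y k"
  shows "has_disjoint_paths V E ends x y k"
proof -
  let ?E1 = "{e\<in>E. ends e \<inter> S \<noteq> {}}" and ?n1 = "\<lambda>e. (\<lambda>w. if w \<in> S then w else y) ` ends e"
  let ?E2 = "{e\<in>E. ends e - S \<noteq> {}}" and ?n2 = "\<lambda>e. (\<lambda>w. if w \<in> S then x else w) ` ends e"
  let ?C = "{e\<in>E. ends e \<inter> S \<noteq> {} \<and> ends e - S \<noteq> {}}"
  obtain P1 where P1: "\<forall>i<k. is_path (insert y S) ?E1 ?n1 x y (fst (P1 i)) (snd (P1 i))"
    "\<forall>i<k. \<forall>j<k. i \<noteq> j \<longrightarrow> set (snd (P1 i)) \<inter> set (snd (P1 j)) = {}"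
    using H1 unfolding has_disjoint_paths_def by blast
  obtain P2 where P2: "\<forall>i<k. is_path (insert x (V - S)) ?E2 ?n2 x y (fst (P2 i)) (snd (P2 i))"
    "\<forall>i<k. \<forall>j<k. i \<noteq> j \<longrightarrow> set (snd (P2 i)) \<inter> set (snd (P2 j)) = {}"
    using H2 unfolding has_disjoint_paths_def by blast
  note A1 = ps1[OF P1(1)[rule_format] xS yS ed]
  note A2 = ps2[OF P2(1)[rule_format] xS yS ed]
  define g1 where "g1 i = last (snd (P1 i))" for i
  define g2 where "g2 i = hd (snd (P2 i))" for i
  have g1C: "g1 i \<in> ?C" if ik: "i < k" for i
  proof -
    from A1(5)[OF ik] obtain w where w: "w \<notin> S" "ends (g1 i) = {fst (P1 i) ! (length (snd (P1 i)) - 1), w}"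
      unfolding g1_def by blast
    have "g1 i \<in> E" using A1(6)[OF ik] A1(1)[OF ik] g1_def by simp
    then show ?thesis using w A1(4)[OF ik] by auto
  qed
  have g2C: "g2 i \<in> ?C" if ik: "i < k" for i
  proof -
    from A2(5)[OF ik] obtain u where u: "u \<in> S" "ends (g2 i) = {u, fst (P2 i) ! 1}"
      unfolding g2_def by blast
    have "g2 i \<in> E" using A2(6)[OF ik] A2(1)[OF ik] g2_def by simp
    then show ?thesis using u A2(4)[OF ik] by auto
  qed
  have inj1: "inj_on g1 {..<k}"
  proof (rule inj_onI)
    fix i j assume ij: "i \<in> {..<k}" "j \<in> {..<k}" "g1 i = g1 j"
    have "g1 i \<in> set (snd (P1 i))" using A1(1)[of i] ij(1) unfolding g1_def by simp
    moreover have "g1 j \<in> set (snd (P1 j))" using A1(1)[of j] ij(2) unfolding g1_def by simp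
    ultimately have "g1 i \<in> set (snd (P1 i))" "g1 i \<in> set (snd (P1 j))" using ij(3) by auto
    then show "i = j" using P1(2) ij by (metis disjoint_iff lessThan_iff)
  qed
  have inj2: "inj_on g2 {..<k}"
  proof (rule inj_onI)
    fix i j assume ij: "i \<in> {..<k}" "j \<in> {..<k}" "g2 i = g2 j"
    have "g2 i \<in> set (snd (P2 i))" using A2(1)[of i] ij(1) unfolding g2_def by simp
    moreover have "g2 j \<in> set (snd (P2 j))" using A2(1)[of j] ij(2) unfolding g2_def by simp
    ultimately have "g2 i \<in> set (snd (P2 i))" "g2 i \<in> set (snd (P2 j))" using ij(3) by auto
    then show "i = j" using P2(2) ij by (metis disjoint_iff lessThan_iff)
  qed
  have finC: "finite ?C" using fE by simp
  have img2: "g2 ` {..<k} = ?C"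
  proof (rule card_subset_eq[OF finC])
    show "g2 ` {..<k} \<subseteq> ?C" using g2C by auto
    show "card (g2 ` {..<k}) = card ?C" using card_image[OF inj2] tight unfolding dc_def by simp
  qed
  define sg where "sg i = inv_into {..<k} g2 (g1 i)" for i
  have sg: "sg i < k \<and> g2 (sg i) = g1 i" if ik: "i < k" for i
  proof -
    have "g1 i \<in> g2 ` {..<k}" using img2 g1C ik by simp
    then show ?thesis unfolding sg_def by (metis inv_into_into f_inv_into_f lessThan_iff)
  qed
  have sginj: "sg i \<noteq> sg j" if ijk: "i < k" "j < k" "i \<noteq> j" for i j
    using sg ijk inj1 by (metis inj_onD lessThan_iff)
  define Q where "Q i = (butlast (fst (P1 i)) @ tl (fst (P2 (sg i))), snd (P1 i) @ tl (snd (P2 (sg i))))" for i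
  have tlS: "ends e \<inter> S = {}" if jk: "j < k" "e \<in> set (tl (snd (P2 j)))" for j e
  proof -
    obtain m where m: "m < length (tl (snd (P2 j)))" "tl (snd (P2 j)) ! m = e" using jk(2) by (metis in_set_conv_nth)
    then have "e = snd (P2 j) ! Suc m" "Suc m < length (snd (P2 j))" by (auto simp: nth_tl)
    then show ?thesis using conjunct2[OF A2(3)[OF jk(1), of "Suc m"]] by blast
  qed
  have Qp: "is_path V E ends x y (fst (Q i)) (snd (Q i))" if i: "i < k" for i
  proof -
    define vs1 where "vs1 = fst (P1 i)"
    define es1 where "es1 = snd (P1 i)"
    define vs2 where "vs2 = fst (P2 (sg i))"
    define es2 where "es2 = snd (P2 (sg i))"
    have si: "sg i < k" using sg i by simp
    note D1 = is_pathD[OF P1(1)[rule_format, OF i]]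
    note D2 = is_pathD[OF P2(1)[rule_format, OF si]]
    have mm: "last es1 = hd es2" using sg[OF i] g1_def g2_def es1_def es2_def by simp
    from A1(5)[OF i] obtain w1 where w1: "w1 \<notin> S" "ends (last es1) = {vs1 ! (length es1 - 1), w1}"
      unfolding vs1_def es1_def by blast
    from A2(5)[OF si] obtain u2 where u2: "u2 \<in> S" "ends (hd es2) = {u2, vs2 ! 1}"
      unfolding vs2_def es2_def by blast
    have "w1 = vs2 ! 1" using pair_eq_split[of "vs1 ! (length es1 - 1)" w1 u2 "vs2 ! 1" S]
      w1 u2 mm A1(4)[OF i] A2(4)[OF si] vs1_def es1_def vs2_def by simp
    then have mc: "ends (hd es2) = {vs1 ! (length es1 - 1), vs2 ! 1}" using w1 mm by simp
    have "is_path V E ends x y (butlast vs1 @ tl vs2) (es1 @ tl es2)"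
    proof (rule glue_path)
      show "length es1 + 1 = length vs1" using D1(6) vs1_def es1_def by simp
      show "length es2 + 1 = length vs2" using D2(6) vs2_def es2_def by simp
      show "es1 \<noteq> []" using A1(1)[OF i] es1_def by simp
      show "es2 \<noteq> []" using A2(1)[OF si] es2_def by simp
      show "hd vs1 = x" using D1(2) vs1_def by simp
      show "last vs2 = y" using D2(3) vs2_def by simp
      show "distinct (butlast vs1)" using D1(4) vs1_def distinct_butlast by blast
      show "distinct (tl vs2)" using D2(4) vs2_def distinct_tl by blast
      show "set (butlast vs1) \<inter> set (tl vs2) = {}" using A1(2)[OF i] A2(2)[OF si] vs1_def vs2_def by blast
      show "set (butlast vs1) \<subseteq> V" using A1(2)[OF i] SV vs1_def by blast
      show "set (tl vs2) \<subseteq> V" using A2(2)[OF si] vs2_def by blast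
      show "set es1 \<subseteq> E" using A1(6)[OF i] es1_def by blast
      show "set es2 \<subseteq> E" using A2(6)[OF si] es2_def by blast
      show "\<And>j. Suc j < length es1 \<Longrightarrow> ends (es1!j) = {vs1!j, vs1!Suc j}" using A1(3)[OF i] vs1_def es1_def by blast
      show "\<And>j. 0 < j \<Longrightarrow> j < length es2 \<Longrightarrow> ends (es2!j) = {vs2!j, vs2!Suc j}" using A2(3)[OF si] vs2_def es2_def by blast
      show "last es1 = hd es2" by (rule mm)
      show "ends (hd es2) = {vs1 ! (length es1 - 1), vs2 ! 1}" by (rule mc)
    qed
    then show ?thesis unfolding Q_def vs1_def vs2_def es1_def es2_def by simp
  qed
  have Qd: "set (snd (Q i)) \<inter> set (snd (Q j)) = {}" if ij: "i < k" "j < k" "i \<noteq> j" for i j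
  proof -
    have a: "set (snd (P1 i)) \<inter> set (snd (P1 j)) = {}" using P1(2) ij by blast
    have b: "set (tl (snd (P2 (sg i)))) \<inter> set (tl (snd (P2 (sg j)))) = {}"
    proof -
      have "set (snd (P2 (sg i))) \<inter> set (snd (P2 (sg j))) = {}" using P2(2) sg sginj ij by blast
      moreover have "set (tl (snd (P2 (sg i)))) \<subseteq> set (snd (P2 (sg i)))" "set (tl (snd (P2 (sg j)))) \<subseteq> set (snd (P2 (sg j)))"
        by (metis set_tl_sub)+
      ultimately show ?thesis by blast
    qed
    have c: "set (snd (P1 i)) \<inter> set (tl (snd (P2 (sg j)))) = {}"
      using A1(6)[OF ij(1)] tlS[of "sg j"] sg[OF ij(2)] by blast
    have d: "set (snd (P1 j)) \<inter> set (tl (snd (P2 (sg i)))) = {}"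
      using A1(6)[OF ij(2)] tlS[of "sg i"] sg[OF ij(1)] by blast
    show ?thesis unfolding Q_def using a b c d by auto
  qed
  show ?thesis unfolding has_disjoint_paths_def using Qp Qd by blast
qed

lemma cut1:
  assumes "S' \<subseteq> insert y S" "y \<notin> S'"
  shows "dc {e\<in>E. ends e \<inter> S \<noteq> {}} (\<lambda>e. (\<lambda>w. if w \<in> S then w else y) ` ends e) S' = dc E ends S'"
proof -
  let ?f = "\<lambda>w. if w \<in> S then w else y"
  have key: "?f w \<in> S' \<longleftrightarrow> w \<in> S'" for w
  proof (cases "w \<in> S")
    case True then show ?thesis by simp
  next
    case False then have "w \<notin> S'" using assms by blast
    then show ?thesis using False assms(2) by simp
  qed
  have "{e\<in>{e\<in>E. ends e \<inter> S \<noteq> {}}. ?f ` ends e \<inter> S' \<noteq> {} \<and> ?f ` ends e - S' \<noteq> {}}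
      = {e\<in>E. ends e \<inter> S' \<noteq> {} \<and> ends e - S' \<noteq> {}}"
  proof -
    have a: "\<And>T. ?f ` T \<inter> S' \<noteq> {} \<longleftrightarrow> T \<inter> S' \<noteq> {}" using key by blast
    have b: "\<And>T. ?f ` T - S' \<noteq> {} \<longleftrightarrow> T - S' \<noteq> {}" using key by blast
    have c: "\<And>T. T \<inter> S' \<noteq> {} \<Longrightarrow> T \<inter> S \<noteq> {}" using assms by blast
    show ?thesis
    proof (rule set_eqI)
      fix e show "e \<in> {e\<in>{e\<in>E. ends e \<inter> S \<noteq> {}}. ?f ` ends e \<inter> S' \<noteq> {} \<and> ?f ` ends e - S' \<noteq> {}} \<longleftrightarrow>
        e \<in> {e\<in>E. ends e \<inter> S' \<noteq> {} \<and> ends e - S' \<noteq> {}}"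
        using c[of "ends e"] unfolding mem_Collect_eq a[of "ends e"] b[of "ends e"] by argo
    qed
  qed
  then show ?thesis unfolding dc_def by simp
qed

lemma cut2:
  assumes "T' \<subseteq> insert x (V - S)" "x \<in> T'" "y \<notin> T'" "x \<in> S" "\<forall>e\<in>E. ends e \<subseteq> V"
  shows "dc {e\<in>E. ends e - S \<noteq> {}} (\<lambda>e. (\<lambda>w. if w \<in> S then x else w) ` ends e) T' = dc E ends (S \<union> (T' - {x}))"
proof -
  let ?f = "\<lambda>w. if w \<in> S then x else w" and ?T = "S \<union> (T' - {x})"
  have key: "?f w \<in> T' \<longleftrightarrow> w \<in> ?T" for w
  proof (cases "w \<in> S")
    case True then show ?thesis using assms(2) by simp
  next
    case False then have "w \<noteq> x" using assms(4) by blast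
    then show ?thesis using False by simp
  qed
  have "{e\<in>{e\<in>E. ends e - S \<noteq> {}}. ?f ` ends e \<inter> T' \<noteq> {} \<and> ?f ` ends e - T' \<noteq> {}}
      = {e\<in>E. ends e \<inter> ?T \<noteq> {} \<and> ends e - ?T \<noteq> {}}"
  proof -
    have a: "\<And>T. ?f ` T \<inter> T' \<noteq> {} \<longleftrightarrow> T \<inter> ?T \<noteq> {}" using key by blast
    have b: "\<And>T. ?f ` T - T' \<noteq> {} \<longleftrightarrow> T - ?T \<noteq> {}" using key by blast
    have c: "\<And>T. T - ?T \<noteq> {} \<Longrightarrow> T - S \<noteq> {}" by blast
    show ?thesis
    proof (rule set_eqI)
      fix e show "e \<in> {e\<in>{e\<in>E. ends e - S \<noteq> {}}. ?f ` ends e \<inter> T' \<noteq> {} \<and> ?f ` ends e - T' \<noteq> {}} \<longleftrightarrow>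
        e \<in> {e\<in>E. ends e \<inter> ?T \<noteq> {} \<and> ends e - ?T \<noteq> {}}"
        using c[of "ends e"] unfolding mem_Collect_eq a[of "ends e"] b[of "ends e"] by argo
    qed
  qed
  then show ?thesis unfolding dc_def by simp
qed

lemma path_xy: "x \<in> V \<Longrightarrow> y \<in> V \<Longrightarrow> x \<noteq> y \<Longrightarrow> e \<in> E \<Longrightarrow> ends e = {x,y} \<Longrightarrow> is_path V E ends x y [x,y] [e]"
  unfolding is_path_def by auto

lemma path_xay: "x \<in> V \<Longrightarrow> y \<in> V \<Longrightarrow> a \<in> V \<Longrightarrow> distinct [x,a,y] \<Longrightarrow> e1 \<in> E \<Longrightarrow> e2 \<in> E \<Longrightarrow>
  ends e1 = {x,a} \<Longrightarrow> ends e2 = {a,y} \<Longrightarrow> is_path V E ends x y [x,a,y] [e1,e2]"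
  unfolding is_path_def by (auto simp: less_Suc_eq)

lemma menger:
  assumes "finite V" "finite E" "\<forall>e\<in>E. ends e \<subseteq> V \<and> card (ends e) \<le> 2" "x \<in> V" "y \<in> V" "x \<noteq> y"
    "\<forall>S. S \<subseteq> V \<longrightarrow> x \<in> S \<longrightarrow> y \<notin> S \<longrightarrow> k \<le> dc E ends S"
  shows "has_disjoint_paths V E ends x y k"
  using assms
proof (induction "card V + card E" arbitrary: V E ends k rule: less_induct)
  case less
  note fV = less.prems(1) and fE = less.prems(2) and ed = less.prems(3) and xV = less.prems(4)
    and yV = less.prems(5) and xy = less.prems(6) and cond = less.prems(7)
  have edf: "\<forall>e\<in>E. finite (ends e) \<and> card (ends e) \<le> 2" using ed fV finite_subset by blast
  show ?case
  proof (cases "k = 0")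
    case True then show ?thesis using hdp_zero by simp
  next
    case kpos: False
    show ?thesis
    proof (cases "\<exists>e\<in>E. \<forall>S. S \<subseteq> V \<longrightarrow> x \<in> S \<longrightarrow> y \<notin> S \<longrightarrow> k \<le> dc (E - {e}) ends S")
      case True
      then obtain e where e: "e \<in> E" "\<forall>S. S \<subseteq> V \<longrightarrow> x \<in> S \<longrightarrow> y \<notin> S \<longrightarrow> k \<le> dc (E - {e}) ends S" by blast
      have m1: "card V + card (E - {e}) < card V + card E" using card_Diff1_less[OF fE e(1)] by simp
      have m2: "finite (E - {e})" using fE by simp
      have m3: "\<forall>e'\<in>E - {e}. ends e' \<subseteq> V \<and> card (ends e') \<le> 2" using ed by blast
      have "has_disjoint_paths V (E - {e}) ends x y k"
        using less.hyps[OF m1 fV m2 m3 xV yV xy e(2)] .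
      then show ?thesis using hdp_mono[OF _ Diff_subset] by metis
    next
      case notdel: False
      have crossing: "\<exists>S. S \<subseteq> V \<and> x \<in> S \<and> y \<notin> S \<and> dc E ends S = k \<and> ends e \<inter> S \<noteq> {} \<and> ends e - S \<noteq> {}"
        if eE: "e \<in> E" for e
      proof -
        from notdel eE obtain S where S: "S \<subseteq> V" "x \<in> S" "y \<notin> S" "dc (E - {e}) ends S < k" by force
        have ge: "k \<le> dc E ends S" using cond S by blast
        note r = dc_remove[OF fE, of ends S e]
        show ?thesis
        proof (cases "ends e \<inter> S \<noteq> {} \<and> ends e - S \<noteq> {}")
          case True
          then have "dc E ends S = dc (E - {e}) ends S + 1" using r eE by simp
          then have "dc E ends S = k" using S(4) ge by linarith
          then show ?thesis using S True by blast
        next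
          case False
          then have "dc E ends S = dc (E - {e}) ends S" using r by simp
          then show ?thesis using S(4) ge by linarith
        qed
      qed
      show ?thesis
      proof (cases "\<exists>e\<in>E. ends e = {x,y}")
        case True
        then obtain e where e: "e \<in> E" "ends e = {x,y}" by blast
        obtain k' where k': "k = Suc k'" using kpos by (cases k) auto
        have c': "\<forall>S. S \<subseteq> V \<longrightarrow> x \<in> S \<longrightarrow> y \<notin> S \<longrightarrow> k' \<le> dc (E - {e}) ends S"
        proof (intro allI impI)
          fix S assume S: "S \<subseteq> V" "x \<in> S" "y \<notin> S"
          have "k \<le> dc E ends S" using cond S by blast
          then show "k' \<le> dc (E - {e}) ends S" using dc_remove[OF fE, of ends S e] k' by (auto split: if_splits)
        qed
        have m1: "card V + card (E - {e}) < card V + card E" using card_Diff1_less[OF fE e(1)] by simp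
        have m2: "finite (E - {e})" using fE by simp
        have m3: "\<forall>e'\<in>E - {e}. ends e' \<subseteq> V \<and> card (ends e') \<le> 2" using ed by blast
        have h: "has_disjoint_paths V (E - {e}) ends x y k'"
          using less.hyps[OF m1 fV m2 m3 xV yV xy c'] .
        have p: "is_path V E ends x y [x,y] [e]" using path_xy xV yV xy e by metis
        show ?thesis using hdp_add[OF h p] k' by auto
      next
        case noxy: False
        show ?thesis
        proof (cases "\<exists>e\<in>E. x \<notin> ends e \<and> y \<notin> ends e")
          case True
          then obtain e where e: "e \<in> E" "x \<notin> ends e" "y \<notin> ends e" by blast
          from crossing[OF e(1)] obtain S where S: "S \<subseteq> V" "x \<in> S" "y \<notin> S" "dc E ends S = k"
            "ends e \<inter> S \<noteq> {}" "ends e - S \<noteq> {}" by blast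
          obtain u where u: "u \<in> ends e" "u \<in> S" using S(5) by blast
          obtain v where v: "v \<in> ends e" "v \<notin> S" using S(6) by blast
          have ux: "u \<noteq> x" using u e by blast
          have vy: "v \<noteq> y" using v e by blast
          have vV: "v \<in> V" using v e ed by blast
          have fS: "finite S" using S(1) fV finite_subset by blast
          have cV: "card V = card S + card (V - S)" using S(1) fV
            by (metis card_Diff_subset card_mono diff_add_inverse fS le_add_diff_inverse)
          have c2: "2 \<le> card (V - S)"
          proof -
            have "{v, y} \<subseteq> V - S" using vV yV v S(3) by blast
            moreover have "card {v,y} = 2" using vy by simp
            ultimately show ?thesis using fV by (metis card_mono finite_Diff)
          qed
          have c1: "2 \<le> card S"
          proof -
            have "{x, u} \<subseteq> S" using u S(2) by blast
            moreover have "card {x,u} = 2" using ux by simp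
            ultimately show ?thesis using fS by (metis card_mono)
          qed
          let ?E1 = "{e\<in>E. ends e \<inter> S \<noteq> {}}" and ?n1 = "\<lambda>e. (\<lambda>w. if w \<in> S then w else y) ` ends e"
          let ?E2 = "{e\<in>E. ends e - S \<noteq> {}}" and ?n2 = "\<lambda>e. (\<lambda>w. if w \<in> S then x else w) ` ends e"
          have H1: "has_disjoint_paths (insert y S) ?E1 ?n1 x y k"
          proof (rule less.hyps)
            have "card (insert y S) = Suc (card S)" using fS S(3) by simp
            moreover have "card ?E1 \<le> card E" using fE by (intro card_mono) auto
            ultimately show "card (insert y S) + card ?E1 < card V + card E" using cV c2 by linarith
            show "finite (insert y S)" using fS by simp
            show "finite ?E1" using fE by simp
            show "\<forall>e\<in>?E1. ?n1 e \<subseteq> insert y S \<and> card (?n1 e) \<le> 2"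
            proof
              fix e assume "e \<in> ?E1"
              then have "finite (ends e)" "card (ends e) \<le> 2" using edf by auto
              then have "card (?n1 e) \<le> 2" using card_image_le le_trans by blast
              moreover have "?n1 e \<subseteq> insert y S" by auto
              ultimately show "?n1 e \<subseteq> insert y S \<and> card (?n1 e) \<le> 2" by simp
            qed
            show "x \<in> insert y S" "y \<in> insert y S" "x \<noteq> y" using S(2) xy by auto
            show "\<forall>S'. S' \<subseteq> insert y S \<longrightarrow> x \<in> S' \<longrightarrow> y \<notin> S' \<longrightarrow> k \<le> dc ?E1 ?n1 S'"
            proof (intro allI impI)
              fix S' assume S': "S' \<subseteq> insert y S" "x \<in> S'" "y \<notin> S'"
              have "S' \<subseteq> V" using S' S(1) by blast
              then have "k \<le> dc E ends S'" using cond S' by blast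
              then show "k \<le> dc ?E1 ?n1 S'" unfolding cut1[OF S'(1) S'(3)] .
            qed
          qed
          have H2: "has_disjoint_paths (insert x (V - S)) ?E2 ?n2 x y k"
          proof (rule less.hyps)
            have "card (insert x (V - S)) = Suc (card (V - S))" using fV S(2) by simp
            moreover have "card ?E2 \<le> card E" using fE by (intro card_mono) auto
            ultimately show "card (insert x (V - S)) + card ?E2 < card V + card E" using cV c1 by linarith
            show "finite (insert x (V - S))" using fV by simp
            show "finite ?E2" using fE by simp
            show "\<forall>e\<in>?E2. ?n2 e \<subseteq> insert x (V - S) \<and> card (?n2 e) \<le> 2"
            proof
              fix e assume eE2: "e \<in> ?E2"
              then have "finite (ends e)" "card (ends e) \<le> 2" using edf by auto
              then have "card (?n2 e) \<le> 2" using card_image_le le_trans by blast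
              moreover have "?n2 e \<subseteq> insert x (V - S)" using eE2 ed by auto
              ultimately show "?n2 e \<subseteq> insert x (V - S) \<and> card (?n2 e) \<le> 2" by simp
            qed
            show "x \<in> insert x (V - S)" "y \<in> insert x (V - S)" "x \<noteq> y" using yV S(3) xy by auto
            show "\<forall>T'. T' \<subseteq> insert x (V - S) \<longrightarrow> x \<in> T' \<longrightarrow> y \<notin> T' \<longrightarrow> k \<le> dc ?E2 ?n2 T'"
            proof (intro allI impI)
              fix T' assume T': "T' \<subseteq> insert x (V - S)" "x \<in> T'" "y \<notin> T'"
              have "S \<union> (T' - {x}) \<subseteq> V" "x \<in> S \<union> (T' - {x})" "y \<notin> S \<union> (T' - {x})"
                using T' S(1,2,3) xV by auto
              then have "k \<le> dc E ends (S \<union> (T' - {x}))" using cond by blast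
              moreover have edV: "\<forall>e\<in>E. ends e \<subseteq> V" using ed by blast
              ultimately show "k \<le> dc ?E2 ?n2 T'" unfolding cut2[OF T'(1-3) S(2) edV] by simp
            qed
          qed
          show ?thesis using glue_case[OF fE edf S(2) S(3) S(1) S(4) H1 H2] .
        next
          case False
          then have touch: "\<forall>e\<in>E. x \<in> ends e \<or> y \<in> ends e" by blast
          define S0 where "S0 = insert x {v. \<exists>e\<in>E. ends e = {x,v}}"
          have S0V: "S0 \<subseteq> V" unfolding S0_def using xV ed by blast
          have yS0: "y \<notin> S0" unfolding S0_def using xy noxy by auto
          have "k \<le> dc E ends S0" using cond S0V yS0 S0_def by blast
          then have "card {e\<in>E. ends e \<inter> S0 \<noteq> {} \<and> ends e - S0 \<noteq> {}} \<noteq> 0" using kpos unfolding dc_def by linarith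
          then have "{e\<in>E. ends e \<inter> S0 \<noteq> {} \<and> ends e - S0 \<noteq> {}} \<noteq> {}" by (metis card.empty)
          then obtain e a b where eab: "e \<in> E" "a \<in> ends e" "a \<in> S0" "b \<in> ends e" "b \<notin> S0" by blast
          have fe: "finite (ends e)" "card (ends e) \<le> 2" using edf eab(1) by auto
          have "y \<in> ends e"
          proof (rule ccontr)
            assume "y \<notin> ends e"
            then have xe: "x \<in> ends e" using touch eab(1) by blast
            have "b \<noteq> x" using eab(5) S0_def by blast
            then have "ends e = {x,b}" using card2_eq[OF fe xe eab(4)] by blast
            then have "b \<in> S0" unfolding S0_def using eab(1) by blast
            then show False using eab(5) by blast
          qed
          have ay: "a \<noteq> y" using eab(3) yS0 by blast
          have e2: "ends e = {a,y}" using card2_eq[OF fe eab(2) \<open>y \<in> ends e\<close> ay] .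
          have ax: "a \<noteq> x" using e2 eab(1) noxy by auto
          then obtain e1 where e1: "e1 \<in> E" "ends e1 = {x,a}" using eab(3) unfolding S0_def by blast
          have aV: "a \<in> V" using eab(3) S0V by blast
          have e12: "e1 \<noteq> e" using e1(2) e2 ax ay xy by (metis doubleton_eq_iff)
          obtain k' where k': "k = Suc k'" using kpos by (cases k) auto
          let ?E' = "E - {e1} - {e}"
          have c': "\<forall>S. S \<subseteq> V \<longrightarrow> x \<in> S \<longrightarrow> y \<notin> S \<longrightarrow> k' \<le> dc ?E' ends S"
          proof (intro allI impI)
            fix S assume S: "S \<subseteq> V" "x \<in> S" "y \<notin> S"
            have kk: "k \<le> dc E ends S" using cond S by blast
            note r1 = dc_remove[OF fE, of ends S e1]
            have r2: "dc (E - {e1}) ends S = dc ?E' ends S + (if e \<in> E - {e1} \<and> ends e \<inter> S \<noteq> {} \<and> ends e - S \<noteq> {} then 1 else 0)"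
              by (rule dc_remove) (use fE in simp)
            have nb: "\<not> ((ends e1 \<inter> S \<noteq> {} \<and> ends e1 - S \<noteq> {}) \<and> (ends e \<inter> S \<noteq> {} \<and> ends e - S \<noteq> {}))"
              using e1(2) e2 S(2,3) by (cases "a \<in> S") auto
            have "dc E ends S \<le> dc ?E' ends S + 1"
            proof (cases "ends e1 \<inter> S \<noteq> {} \<and> ends e1 - S \<noteq> {}")
              case True
              then have n2: "\<not> (e \<in> E - {e1} \<and> ends e \<inter> S \<noteq> {} \<and> ends e - S \<noteq> {})" using nb by blast
              have "dc (E - {e1}) ends S = dc ?E' ends S" using r2 n2 by (simp only: if_False)
              moreover have "dc E ends S = dc (E - {e1}) ends S + 1" using r1 True e1(1) by simp
              ultimately show ?thesis by simp
            next
              case False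
              then have "dc E ends S = dc (E - {e1}) ends S" using r1 by simp
              moreover have "dc (E - {e1}) ends S \<le> dc ?E' ends S + 1" using r2 by simp
              ultimately show ?thesis by simp
            qed
            then show "k' \<le> dc ?E' ends S" using kk k' by simp
          qed
          have "card ?E' \<le> card (E - {e1})" using fE by (intro card_mono) auto
          then have m1: "card V + card ?E' < card V + card E" using card_Diff1_less[OF fE e1(1)] by simp
          have m2: "finite ?E'" using fE by simp
          have m3: "\<forall>e'\<in>?E'. ends e' \<subseteq> V \<and> card (ends e') \<le> 2" using ed by blast
          have h: "has_disjoint_paths V ?E' ends x y k'"
            using less.hyps[OF m1 fV m2 m3 xV yV xy c'] .
          have p: "is_path V E ends x y [x,a,y] [e1,e]" using path_xay[OF xV yV aV _ e1(1) eab(1) e1(2) e2] ax ay xy by auto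
          have "set [e1,e] \<inter> ?E' = {}" by auto
          then show ?thesis using hdp_add[OF h p] k' by auto
        qed
      qed
    qed
  qed
qed

lemma conn_iff:
  assumes fV: "finite V" and fE: "finite E" and ed: "\<forall>e\<in>E. ends e \<subseteq> V \<and> card (ends e) \<le> 2"
    and xV: "x \<in> V" and yV: "y \<in> V" and xy: "x \<noteq> y"
  shows "k \<le> edge_conn V E ends x y \<longleftrightarrow> (\<forall>S. S \<subseteq> V \<longrightarrow> x \<in> S \<longrightarrow> y \<notin> S \<longrightarrow> k \<le> dc E ends S)"
proof -
  define K where "K = {k. has_disjoint_paths V E ends x y k}"
  have bnd: "j \<le> dc E ends {x}" if "j \<in> K" for j
    using easy[OF fE, of V ends x y j "{x}"] that xy unfolding K_def by simp
  have finK: "finite K" using bnd by (meson finite_nat_set_iff_bounded_le)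
  have K0: "0 \<in> K" unfolding K_def using hdp_zero by (metis mem_Collect_eq)
  then have Kne: "K \<noteq> {}" by blast
  have ec: "edge_conn V E ends x y = Max K" unfolding edge_conn_def K_def[symmetric] Sup_nat_def using Kne by simp
  have MK: "Max K \<in> K" using finK Kne by simp
  show ?thesis
  proof
    assume k: "k \<le> edge_conn V E ends x y"
    show "\<forall>S. S \<subseteq> V \<longrightarrow> x \<in> S \<longrightarrow> y \<notin> S \<longrightarrow> k \<le> dc E ends S"
    proof (intro allI impI)
      fix S assume S: "S \<subseteq> V" "x \<in> S" "y \<notin> S"
      have "Max K \<le> dc E ends S" using easy[OF fE _ S(2,3)] MK unfolding K_def by blast
      then show "k \<le> dc E ends S" using k ec by simp
    qed
  next
    assume c: "\<forall>S. S \<subseteq> V \<longrightarrow> x \<in> S \<longrightarrow> y \<notin> S \<longrightarrow> k \<le> dc E ends S"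
    have "k \<in> K" unfolding K_def using menger[OF fV fE ed xV yV xy c] by simp
    then show "k \<le> edge_conn V E ends x y" using ec finK by simp
  qed
qed

lemma two_cases: "finite T \<Longrightarrow> card T \<le> 2 \<Longrightarrow> T = {} \<or> (\<exists>u v. T = {u,v})"
proof -
  assume f: "finite T" and c: "card T \<le> 2"
  consider "card T = 0" | "card T = 1" | "card T = 2" using c by linarith
  then show ?thesis
  proof cases
    case 1 then show ?thesis using f by simp
  next
    case 2 then obtain u where "T = {u}" using card_1_singletonE by blast
    then have "T = {u,u}" by simp
    then show ?thesis by blast
  next
    case 3 then obtain u v where "T = {u,v}" unfolding card_2_iff by blast
    then show ?thesis by blast
  qed
qed

abbreviation cr :: "'v set \<Rightarrow> 'v set \<Rightarrow> nat" where
  "cr S T \<equiv> (if T \<inter> S \<noteq> {} \<and> T - S \<noteq> {} then 1 else 0)"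

lemma dc_sum: "finite E \<Longrightarrow> dc E ends S = (\<Sum>e\<in>E. cr S (ends e))"
  unfolding dc_def by (simp add: sum.inter_filter[symmetric])

lemma card_sum: "finite E \<Longrightarrow> card {e\<in>E. P e} = (\<Sum>e\<in>E. if P e then 1 else 0)"
  by (simp add: sum.inter_filter[symmetric])

definition ok_edges :: "'e set \<Rightarrow> ('e \<Rightarrow> 'v set) \<Rightarrow> bool" where
  "ok_edges E ends \<longleftrightarrow> finite E \<and> (\<forall>e\<in>E. finite (ends e) \<and> card (ends e) \<le> 2)"

lemma ok_cases: "ok_edges E ends \<Longrightarrow> e \<in> E \<Longrightarrow> ends e = {} \<or> (\<exists>u v. ends e = {u,v})"
  unfolding ok_edges_def using two_cases by blast

lemma sub_pt: "cr (X \<inter> Y) {u,v} + cr (X \<union> Y) {u,v} \<le> cr X {u,v} + cr Y {u,v}"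
  by (cases "u \<in> X"; cases "u \<in> Y"; cases "v \<in> X"; cases "v \<in> Y") auto

lemma posi_pt: "cr (X - Y) {u,v} + cr (Y - X) {u,v} + 2 * (if {u,v} \<inter> (X \<inter> Y) \<noteq> {} \<and> {u,v} - (X \<union> Y) \<noteq> {} then 1 else 0)
       \<le> cr X {u,v} + cr Y {u,v}"
  by (cases "u \<in> X"; cases "u \<in> Y"; cases "v \<in> X"; cases "v \<in> Y") auto

lemma par_pt: "P \<inter> Q = {} \<Longrightarrow> cr P {u,v} + cr Q {u,v} = cr (P \<union> Q) {u,v} + 2 * (if {u,v} \<inter> P \<noteq> {} \<and> {u,v} \<inter> Q \<noteq> {} then 1 else 0)"
  by (cases "u \<in> P"; cases "u \<in> Q"; cases "v \<in> P"; cases "v \<in> Q") auto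

lemma submod:
  assumes "ok_edges E ends"
  shows "dc E ends (X \<inter> Y) + dc E ends (X \<union> Y) \<le> dc E ends X + dc E ends Y"
proof -
  have fE: "finite E" using assms ok_edges_def by blast
  have "(\<Sum>e\<in>E. cr (X \<inter> Y) (ends e) + cr (X \<union> Y) (ends e)) \<le> (\<Sum>e\<in>E. cr X (ends e) + cr Y (ends e))"
  proof (rule sum_mono)
    fix e assume "e \<in> E"
    then consider "ends e = {}" | u v where "ends e = {u,v}" using ok_cases[OF assms] by blast
    then show "cr (X \<inter> Y) (ends e) + cr (X \<union> Y) (ends e) \<le> cr X (ends e) + cr Y (ends e)"
    proof cases
      case 1 then show ?thesis by simp
    next
      case 2 then show ?thesis using sub_pt by metis
    qed
  qed
  then show ?thesis using fE by (simp add: dc_sum sum.distrib)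
qed

lemma posimod:
  assumes "ok_edges E ends"
  shows "dc E ends (X - Y) + dc E ends (Y - X) + 2 * card {e\<in>E. ends e \<inter> (X \<inter> Y) \<noteq> {} \<and> ends e - (X \<union> Y) \<noteq> {}}
     \<le> dc E ends X + dc E ends Y"
proof -
  have fE: "finite E" using assms ok_edges_def by blast
  have "(\<Sum>e\<in>E. cr (X - Y) (ends e) + cr (Y - X) (ends e) + 2 * (if ends e \<inter> (X \<inter> Y) \<noteq> {} \<and> ends e - (X \<union> Y) \<noteq> {} then 1 else 0))
     \<le> (\<Sum>e\<in>E. cr X (ends e) + cr Y (ends e))"
  proof (rule sum_mono)
    fix e assume "e \<in> E"
    then consider "ends e = {}" | u v where "ends e = {u,v}" using ok_cases[OF assms] by blast
    then show "cr (X - Y) (ends e) + cr (Y - X) (ends e) + 2 * (if ends e \<inter> (X \<inter> Y) \<noteq> {} \<and> ends e - (X \<union> Y) \<noteq> {} then 1 else 0)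
       \<le> cr X (ends e) + cr Y (ends e)"
    proof cases
      case 1 then show ?thesis by simp
    next
      case 2 then show ?thesis using posi_pt by metis
    qed
  qed
  then show ?thesis using fE by (simp add: dc_sum card_sum sum.distrib sum_distrib_left)
qed

lemma tri_pt:
  "cr (X \<inter> Y \<inter> Z) {u,v} + cr (X - Y - Z) {u,v} + cr (Y - X - Z) {u,v} + cr (Z - X - Y) {u,v}
       + 2 * (if {u,v} \<inter> (X \<inter> Y \<inter> Z) \<noteq> {} \<and> {u,v} - (X \<union> Y \<union> Z) \<noteq> {} then 1 else 0)
     \<le> cr X {u,v} + cr Y {u,v} + cr Z {u,v}"
  by (cases "u \<in> X"; cases "u \<in> Y"; cases "u \<in> Z"; cases "v \<in> X"; cases "v \<in> Y"; cases "v \<in> Z") auto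

lemma trimod:
  assumes "ok_edges E ends"
  shows "dc E ends (X \<inter> Y \<inter> Z) + dc E ends (X - Y - Z) + dc E ends (Y - X - Z) + dc E ends (Z - X - Y)
     + 2 * card {e\<in>E. ends e \<inter> (X \<inter> Y \<inter> Z) \<noteq> {} \<and> ends e - (X \<union> Y \<union> Z) \<noteq> {}}
     \<le> dc E ends X + dc E ends Y + dc E ends Z"
proof -
  have fE: "finite E" using assms ok_edges_def by blast
  have "(\<Sum>e\<in>E. cr (X \<inter> Y \<inter> Z) (ends e) + cr (X - Y - Z) (ends e) + cr (Y - X - Z) (ends e) + cr (Z - X - Y) (ends e)
       + 2 * (if ends e \<inter> (X \<inter> Y \<inter> Z) \<noteq> {} \<and> ends e - (X \<union> Y \<union> Z) \<noteq> {} then 1 else 0))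
     \<le> (\<Sum>e\<in>E. cr X (ends e) + cr Y (ends e) + cr Z (ends e))"
  proof (rule sum_mono)
    fix e assume "e \<in> E"
    then consider "ends e = {}" | u v where "ends e = {u,v}" using ok_cases[OF assms] by blast
    then show "cr (X \<inter> Y \<inter> Z) (ends e) + cr (X - Y - Z) (ends e) + cr (Y - X - Z) (ends e) + cr (Z - X - Y) (ends e)
       + 2 * (if ends e \<inter> (X \<inter> Y \<inter> Z) \<noteq> {} \<and> ends e - (X \<union> Y \<union> Z) \<noteq> {} then 1 else 0)
     \<le> cr X (ends e) + cr Y (ends e) + cr Z (ends e)"
    proof cases
      case 1 then show ?thesis by simp
    next
      case 2 then show ?thesis using tri_pt by metis
    qed
  qed
  then show ?thesis using fE by (simp add: dc_sum card_sum sum.distrib sum_distrib_left)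
qed

lemma parity:
  assumes "ok_edges E ends" "P \<inter> Q = {}"
  shows "dc E ends P + dc E ends Q = dc E ends (P \<union> Q) + 2 * card {e\<in>E. ends e \<inter> P \<noteq> {} \<and> ends e \<inter> Q \<noteq> {}}"
proof -
  have fE: "finite E" using assms ok_edges_def by blast
  have "(\<Sum>e\<in>E. cr P (ends e) + cr Q (ends e)) = (\<Sum>e\<in>E. cr (P \<union> Q) (ends e) + 2 * (if ends e \<inter> P \<noteq> {} \<and> ends e \<inter> Q \<noteq> {} then 1 else 0))"
  proof (rule sum.cong)
    fix e assume "e \<in> E"
    then consider "ends e = {}" | u v where "ends e = {u,v}" using ok_cases[OF assms(1)] by blast
    then show "cr P (ends e) + cr Q (ends e) = cr (P \<union> Q) (ends e) + 2 * (if ends e \<inter> P \<noteq> {} \<and> ends e \<inter> Q \<noteq> {} then 1 else 0)"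
    proof cases
      case 1 then show ?thesis by simp
    next
      case 2 then show ?thesis using par_pt assms(2) by metis
    qed
  qed simp
  then show ?thesis using fE by (simp add: dc_sum card_sum sum.distrib sum_distrib_left)
qed

lemma dc_compl:
  assumes "\<forall>e\<in>E. ends e \<subseteq> V" "S \<subseteq> V"
  shows "dc E ends (V - S) = dc E ends S"
proof -
  have "{e\<in>E. ends e \<inter> (V - S) \<noteq> {} \<and> ends e - (V - S) \<noteq> {}} = {e\<in>E. ends e \<inter> S \<noteq> {} \<and> ends e - S \<noteq> {}}"
    using assms by blast
  then show ?thesis unfolding dc_def by simp
qed

lemma s_pt: "w \<noteq> s \<Longrightarrow> s \<notin> S \<Longrightarrow> cr (insert s S) {s,w} + 2*(if w \<in> S then 1 else 0) = cr S {s,w} + 1"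
  by (cases "w \<in> S") auto

locale LS =
  fixes V :: "'v set" and E :: "'e set" and ends :: "'e \<Rightarrow> 'v set" and s :: 'v and A :: "'v set" and l :: nat
  assumes mg: "multigraph V E ends" and sV: "s \<in> V" and AV: "A \<subseteq> V" and sA: "s \<notin> A"
    and cn: "\<forall>x\<in>A. \<forall>y\<in>A. x \<noteq> y \<longrightarrow> edge_conn V E ends x y \<ge> l"
    and tc: "\<forall>e\<in>E. ends e \<inter> A \<noteq> {}"
    and deg: "card (incident_edges E ends s) = 4"
    and l4: "l \<ge> 4"
begin

abbreviation "inc \<equiv> incident_edges E ends s"
abbreviation "t \<equiv> other_end ends s"

lemma fV: "finite V" and fE: "finite E" and edV: "\<forall>e\<in>E. ends e \<subseteq> V" and ed2: "\<forall>e\<in>E. card (ends e) = 2"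
  using mg unfolding multigraph_def by auto

lemma ed: "\<forall>e\<in>E. ends e \<subseteq> V \<and> card (ends e) \<le> 2" using edV ed2 by simp

lemma ok: "ok_edges E ends"
  unfolding ok_edges_def using fE edV ed2 fV finite_subset by fastforce

lemma conn: assumes "S \<subseteq> V" "S \<inter> A \<noteq> {}" "A - S \<noteq> {}" shows "l \<le> dc E ends S"
proof -
  obtain x y where xy: "x \<in> S" "x \<in> A" "y \<in> A" "y \<notin> S" using assms by blast
  then have "x \<noteq> y" by blast
  then have "l \<le> edge_conn V E ends x y" using cn xy by blast
  then show ?thesis using conn_iff[OF fV fE ed, of x y l] xy AV assms(1) \<open>x \<noteq> y\<close> by blast
qed

lemma inc_prop: assumes "e \<in> inc" shows "e \<in> E" "ends e = {s, t e}" "t e \<noteq> s" "t e \<in> A"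
proof -
  show eE: "e \<in> E" using assms unfolding incident_edges_def by simp
  have se: "s \<in> ends e" using assms unfolding incident_edges_def by simp
  have "card (ends e) = 2" using ed2 eE by simp
  then obtain a b where ab: "ends e = {a,b}" "a \<noteq> b" unfolding card_2_iff by blast
  obtain w where w: "ends e = {s,w}" "w \<noteq> s" using ab se by (metis insert_commute insertE singletonD)
  have "(THE x. ends e = {s,x}) = w"
  proof (rule the_equality)
    show "ends e = {s,w}" by (rule w(1))
    fix x assume "ends e = {s,x}"
    then show "x = w" using w by (metis doubleton_eq_iff)
  qed
  then have tw: "t e = w" unfolding other_end_def by simp
  then show "ends e = {s, t e}" "t e \<noteq> s" using w by auto
  have "ends e \<inter> A \<noteq> {}" using tc eE by blast
  then show "t e \<in> A" using w tw sA by auto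
qed

lemma finc: "finite inc" unfolding incident_edges_def using fE by simp

lemma sadd: assumes "s \<notin> S"
  shows "dc E ends (insert s S) + 2 * card {e\<in>inc. t e \<in> S} = dc E ends S + 4"
proof -
  have incE: "inc \<subseteq> E" unfolding incident_edges_def by blast
  have pt1: "cr (insert s S) (ends e) + 2 * (if t e \<in> S then 1 else 0) = cr S (ends e) + 1" if "e \<in> inc" for e
  proof -
    have h: "ends e = {s, t e}" "t e \<noteq> s" using inc_prop[OF that] by auto
    show ?thesis unfolding h(1) using s_pt[OF h(2) assms] by simp
  qed
  have pt2: "cr (insert s S) (ends e) = cr S (ends e)" if "e \<in> E - inc" for e
  proof -
    have "s \<notin> ends e" using that unfolding incident_edges_def by blast
    then show ?thesis by auto
  qed
  have "dc E ends (insert s S) = (\<Sum>e\<in>E - inc. cr (insert s S) (ends e)) + (\<Sum>e\<in>inc. cr (insert s S) (ends e))"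
    unfolding dc_sum[OF fE] by (rule sum.subset_diff[OF incE fE])
  moreover have "dc E ends S = (\<Sum>e\<in>E - inc. cr S (ends e)) + (\<Sum>e\<in>inc. cr S (ends e))"
    unfolding dc_sum[OF fE] by (rule sum.subset_diff[OF incE fE])
  moreover have "(\<Sum>e\<in>E - inc. cr (insert s S) (ends e)) = (\<Sum>e\<in>E - inc. cr S (ends e))"
    using pt2 by (rule sum.cong[OF refl])
  moreover have "(\<Sum>e\<in>inc. cr (insert s S) (ends e)) + 2 * card {e\<in>inc. t e \<in> S} = (\<Sum>e\<in>inc. cr S (ends e)) + 4"
  proof -
    have "(\<Sum>e\<in>inc. cr (insert s S) (ends e) + 2 * (if t e \<in> S then 1 else 0)) = (\<Sum>e\<in>inc. cr S (ends e) + 1)"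
      using pt1 by (rule sum.cong[OF refl])
    moreover have "(\<Sum>e\<in>inc. cr S (ends e) + 1) = (\<Sum>e\<in>inc. cr S (ends e)) + card inc"
      by (simp only: sum.distrib card_eq_sum)
    moreover have "(\<Sum>e\<in>inc. cr (insert s S) (ends e) + 2 * (if t e \<in> S then 1 else 0))
       = (\<Sum>e\<in>inc. cr (insert s S) (ends e)) + 2 * card {e\<in>inc. t e \<in> S}"
      by (simp only: sum.distrib card_sum[OF finc] sum_distrib_left)
    ultimately show ?thesis using deg by simp
  qed
  ultimately show ?thesis by simp
qed

definition dang :: "'e \<Rightarrow> 'e \<Rightarrow> bool" where
  "dang i j \<longleftrightarrow> (\<exists>X. X \<subseteq> V - {s} \<and> X \<inter> A \<noteq> {} \<and> A - X \<noteq> {} \<and> t i \<in> X \<and> t j \<in> X \<and> dc E ends X \<le> l + 1)"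

lemma dang_sym: "dang i j \<longleftrightarrow> dang j i" unfolding dang_def by blast

lemma three:
  assumes X: "X \<subseteq> V - {s}" "X \<inter> A \<noteq> {}" "A - X \<noteq> {}" "t i \<in> X" "t j \<in> X" "dc E ends X \<le> l + 1"
    and ij: "i \<in> inc" "j \<in> inc" "k \<in> inc" "i \<noteq> j" "k \<noteq> i" "k \<noteq> j"
  shows "t k \<notin> X"
proof
  assume tk: "t k \<in> X"
  have sX: "s \<notin> X" using X(1) by blast
  have "{i,j,k} \<subseteq> {e\<in>inc. t e \<in> X}" using ij X tk by auto
  moreover have "finite {e\<in>inc. t e \<in> X}" using finc by simp
  ultimately have "card {i,j,k} \<le> card {e\<in>inc. t e \<in> X}" by (rule card_mono[rotated])
  moreover have "card {i,j,k} = 3" using ij by auto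
  ultimately have c3: "3 \<le> card {e\<in>inc. t e \<in> X}" by simp
  have "l \<le> dc E ends (insert s X)"
  proof (rule conn)
    show "insert s X \<subseteq> V" using X(1) sV by blast
    show "insert s X \<inter> A \<noteq> {}" using X(2) by blast
    show "A - insert s X \<noteq> {}" using X(3) sA by blast
  qed
  then show False using sadd[OF sX] c3 X(6) by linarith
qed

end

context LS begin

lemma dangE:
  assumes "dang i j"
  obtains X where "X \<subseteq> V - {s}" "X \<inter> A \<noteq> {}" "A - X \<noteq> {}" "t i \<in> X" "t j \<in> X" "dc E ends X \<le> l + 1"
  using assms unfolding dang_def by blast

lemma tV: "e \<in> inc \<Longrightarrow> t e \<in> V - {s}" using inc_prop AV by blast

lemma cnt_pos: assumes "e \<in> E" "ends e \<inter> P \<noteq> {}" "ends e - Q \<noteq> {}"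
  shows "1 \<le> card {e\<in>E. ends e \<inter> P \<noteq> {} \<and> ends e - Q \<noteq> {}}"
proof -
  define C where "C = {e\<in>E. ends e \<inter> P \<noteq> {} \<and> ends e - Q \<noteq> {}}"
  have "finite C" using fE unfolding C_def by simp
  moreover have "e \<in> C" using assms unfolding C_def by simp
  ultimately have "0 < card C" using card_gt_0_iff by blast
  then show ?thesis unfolding C_def by simp
qed

lemma compl_dang:
  assumes inc4: "inc = {i,j,k,m}" and dist: "distinct [i,j,k,m]" and d: "dang i j"
  shows "dang k m"
proof -
  have ii: "i \<in> inc" "j \<in> inc" "k \<in> inc" "m \<in> inc" using inc4 by auto
  obtain X where X: "X \<subseteq> V - {s}" "X \<inter> A \<noteq> {}" "A - X \<noteq> {}" "t i \<in> X" "t j \<in> X" "dc E ends X \<le> l + 1"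
    using d dangE by blast
  have tk: "t k \<notin> X" using three[OF X ii(1,2,3)] dist by auto
  have tm: "t m \<notin> X" using three[OF X ii(1,2,4)] dist by auto
  have "{e\<in>inc. t e \<in> X} = {i,j}" using inc4 X(4,5) tk tm by auto
  then have c2: "card {e\<in>inc. t e \<in> X} = 2" using dist by simp
  have sX: "s \<notin> X" using X(1) by blast
  have e1: "dc E ends (insert s X) = dc E ends X" using sadd[OF sX] c2 by simp
  define Y where "Y = V - insert s X"
  have "insert s X \<subseteq> V" using X(1) sV by blast
  then have e2: "dc E ends Y = dc E ends (insert s X)" unfolding Y_def using dc_compl[OF edV] by blast
  show ?thesis unfolding dang_def
  proof (intro exI[of _ Y] conjI)
    show "Y \<subseteq> V - {s}" unfolding Y_def by blast
    show "Y \<inter> A \<noteq> {}" using tV[OF ii(3)] inc_prop(4)[OF ii(3)] tk unfolding Y_def by blast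
    show "A - Y \<noteq> {}" using X(4) inc_prop(4)[OF ii(1)] unfolding Y_def by blast
    show "t k \<in> Y" using tV[OF ii(3)] tk unfolding Y_def by blast
    show "t m \<in> Y" using tV[OF ii(4)] tm unfolding Y_def by blast
    show "dc E ends Y \<le> l + 1" using e1 e2 X(6) by simp
  qed
qed

lemma two_dang_odd:
  assumes inc4: "inc = {i,j,k,m}" and dist: "distinct [i,j,k,m]" and d1: "dang i j" and d2: "dang i k"
  shows "odd l"
proof -
  have ii: "i \<in> inc" "j \<in> inc" "k \<in> inc" "m \<in> inc" using inc4 by auto
  obtain X where X: "X \<subseteq> V - {s}" "X \<inter> A \<noteq> {}" "A - X \<noteq> {}" "t i \<in> X" "t j \<in> X" "dc E ends X \<le> l + 1"
    using d1 dangE by blast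
  obtain Y where Y: "Y \<subseteq> V - {s}" "Y \<inter> A \<noteq> {}" "A - Y \<noteq> {}" "t i \<in> Y" "t k \<in> Y" "dc E ends Y \<le> l + 1"
    using d2 dangE by blast
  have tkX: "t k \<notin> X" using three[OF X ii(1,2,3)] dist by auto
  have tmX: "t m \<notin> X" using three[OF X ii(1,2,4)] dist by auto
  have tjY: "t j \<notin> Y" using three[OF Y ii(1,3,2)] dist by auto
  have tmY: "t m \<notin> Y" using three[OF Y ii(1,3,4)] dist by auto
  have A: "t i \<in> A" "t j \<in> A" "t k \<in> A" "t m \<in> A" using inc_prop(4) ii by auto
  have d_XY: "l \<le> dc E ends (X - Y)" using X(1) X(5) tjY A(1,2) Y(4) by (intro conn) auto
  have d_YX: "l \<le> dc E ends (Y - X)" using Y(1) Y(5) tkX A(1,3) X(4) by (intro conn) auto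
  have d_I: "l \<le> dc E ends (X \<inter> Y)" using X(1) X(4) Y(4) A(1,2) tjY by (intro conn) auto
  have sXY: "s \<notin> X \<union> Y" using X(1) Y(1) by blast
  have "{e\<in>inc. t e \<in> X \<union> Y} = {i,j,k}" using inc4 X(4,5) Y(5) tmX tmY by auto
  then have c3: "card {e\<in>inc. t e \<in> X \<union> Y} = 3" using dist by simp
  have "l \<le> dc E ends (insert s (X \<union> Y))"
    using X(1) Y(1) sV X(4) A(1,4) tmX tmY inc_prop(3)[OF ii(4)] by (intro conn) auto
  then have d_U: "l + 2 \<le> dc E ends (X \<union> Y)" using sadd[OF sXY] c3 by simp
  have ie: "i \<in> E" "ends i = {s, t i}" using inc_prop ii by auto
  have cnt: "1 \<le> card {e\<in>E. ends e \<inter> (X \<inter> Y) \<noteq> {} \<and> ends e - (X \<union> Y) \<noteq> {}}"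
    using cnt_pos[OF ie(1)] ie(2) X(4) Y(4) sXY by auto
  have pm: "dc E ends (X - Y) + dc E ends (Y - X) + 2 * card {e\<in>E. ends e \<inter> (X \<inter> Y) \<noteq> {} \<and> ends e - (X \<union> Y) \<noteq> {}}
     \<le> dc E ends X + dc E ends Y" by (rule posimod[OF ok])
  have sm: "dc E ends (X \<inter> Y) + dc E ends (X \<union> Y) \<le> dc E ends X + dc E ends Y" by (rule submod[OF ok])
  have eX: "dc E ends X = l + 1" and eQ: "dc E ends (X - Y) = l" using pm cnt d_XY d_YX X(6) Y(6) by linarith+
  have eP: "dc E ends (X \<inter> Y) = l" using sm d_U d_I X(6) Y(6) by linarith
  have "(X \<inter> Y) \<inter> (X - Y) = {}" by blast
  from parity[OF ok this] have "dc E ends (X \<inter> Y) + dc E ends (X - Y) = dc E ends X + 2 * card {e\<in>E. ends e \<inter> (X \<inter> Y) \<noteq> {} \<and> ends e \<inter> (X - Y) \<noteq> {}}"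
    by (metis Int_Diff_Un)
  then have "l + l = l + 1 + 2 * card {e\<in>E. ends e \<inter> (X \<inter> Y) \<noteq> {} \<and> ends e \<inter> (X - Y) \<noteq> {}}"
    using eX eP eQ by simp
  then show "odd l" by presburger
qed

lemma three_dang_false:
  assumes inc4: "inc = {i,j,k,m}" and dist: "distinct [i,j,k,m]" and d1: "dang i j" and d2: "dang i k" and d3: "dang i m"
  shows False
proof -
  have ii: "i \<in> inc" "j \<in> inc" "k \<in> inc" "m \<in> inc" using inc4 by auto
  obtain X where X: "X \<subseteq> V - {s}" "X \<inter> A \<noteq> {}" "A - X \<noteq> {}" "t i \<in> X" "t j \<in> X" "dc E ends X \<le> l + 1"
    using d1 dangE by blast
  obtain Y where Y: "Y \<subseteq> V - {s}" "Y \<inter> A \<noteq> {}" "A - Y \<noteq> {}" "t i \<in> Y" "t k \<in> Y" "dc E ends Y \<le> l + 1"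
    using d2 dangE by blast
  obtain Z where Z: "Z \<subseteq> V - {s}" "Z \<inter> A \<noteq> {}" "A - Z \<noteq> {}" "t i \<in> Z" "t m \<in> Z" "dc E ends Z \<le> l + 1"
    using d3 dangE by blast
  have tkX: "t k \<notin> X" using three[OF X ii(1,2,3)] dist by auto
  have tmX: "t m \<notin> X" using three[OF X ii(1,2,4)] dist by auto
  have tjY: "t j \<notin> Y" using three[OF Y ii(1,3,2)] dist by auto
  have tmY: "t m \<notin> Y" using three[OF Y ii(1,3,4)] dist by auto
  have tjZ: "t j \<notin> Z" using three[OF Z ii(1,4,2)] dist by auto
  have tkZ: "t k \<notin> Z" using three[OF Z ii(1,4,3)] dist by auto
  have A: "t i \<in> A" "t j \<in> A" "t k \<in> A" "t m \<in> A" using inc_prop(4) ii by auto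
  have d1: "l \<le> dc E ends (X \<inter> Y \<inter> Z)" using X(1) X(4) Y(4) Z(4) A(1,2) tjY by (intro conn) auto
  have d2: "l \<le> dc E ends (X - Y - Z)" using X(1) X(5) tjY tjZ A(1,2) Y(4) by (intro conn) auto
  have d3: "l \<le> dc E ends (Y - X - Z)" using Y(1) Y(5) tkX tkZ A(1,3) X(4) by (intro conn) auto
  have d4: "l \<le> dc E ends (Z - X - Y)" using Z(1) Z(5) tmX tmY A(1,4) X(4) by (intro conn) auto
  have sXYZ: "s \<notin> X \<union> Y \<union> Z" using X(1) Y(1) Z(1) by blast
  have ie: "i \<in> E" "ends i = {s, t i}" using inc_prop ii by auto
  have cnt: "1 \<le> card {e\<in>E. ends e \<inter> (X \<inter> Y \<inter> Z) \<noteq> {} \<and> ends e - (X \<union> Y \<union> Z) \<noteq> {}}"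
    using cnt_pos[OF ie(1)] ie(2) X(4) Y(4) Z(4) sXYZ by auto
  have "dc E ends (X \<inter> Y \<inter> Z) + dc E ends (X - Y - Z) + dc E ends (Y - X - Z) + dc E ends (Z - X - Y)
     + 2 * card {e\<in>E. ends e \<inter> (X \<inter> Y \<inter> Z) \<noteq> {} \<and> ends e - (X \<union> Y \<union> Z) \<noteq> {}}
     \<le> dc E ends X + dc E ends Y + dc E ends Z" by (rule trimod[OF ok])
  then show False using d1 d2 d3 d4 cnt X(6) Y(6) Z(6) l4 by linarith
qed

end

lemma lift_pt: "s \<notin> S \<Longrightarrow> cr S {s,a} + cr S {s,b} = cr S {a,b} + 2 * (if a \<in> S \<and> b \<in> S then 1 else 0)"
  by (cases "a \<in> S"; cases "b \<in> S") auto

context LS begin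

lemma adm_iff:
  assumes ii: "i \<in> inc" "j \<in> inc" "i \<noteq> j"
  shows "admissible V E ends s A l i j \<longleftrightarrow> \<not> dang i j"
proof -
  define E' where "E' = E - {j}"
  define n' where "n' = ends(i := {t i, t j})"
  have lift: "lift_edges E ends s i j = (E', n')" unfolding lift_edges_def E'_def n'_def by simp
  have adm: "admissible V E ends s A l i j \<longleftrightarrow>
     (\<forall>x\<in>V - {s}. \<forall>y\<in>V - {s}. x \<noteq> y \<longrightarrow> edge_conn V E' n' x y \<ge> tau A l x y)"
    unfolding admissible_def lift using ii by simp
  have iE: "i \<in> E" "j \<in> E" using inc_prop ii by auto
  have endsi: "ends i = {s, t i}" "ends j = {s, t j}" using inc_prop ii by auto
  have tiV: "t i \<in> V - {s}" "t j \<in> V - {s}" using tV ii by auto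
  have fE': "finite E'" using fE E'_def by simp
  have ed': "\<forall>e\<in>E'. n' e \<subseteq> V \<and> card (n' e) \<le> 2"
  proof
    fix e assume "e \<in> E'"
    show "n' e \<subseteq> V \<and> card (n' e) \<le> 2"
    proof (cases "e = i")
      case True
      have "card {t i, t j} \<le> 2" by (simp add: card_insert_le_m1)
      then show ?thesis using True tiV n'_def by simp
    next
      case False then show ?thesis using \<open>e \<in> E'\<close> ed n'_def E'_def by simp
    qed
  qed
  have dcrel: "dc E' n' S + 2 * (if t i \<in> S \<and> t j \<in> S then 1 else 0) = dc E ends S" if sS: "s \<notin> S" for S
  proof -
    have iE': "i \<in> E'" using iE ii(3) E'_def by simp
    have a: "dc E ends S = cr S (ends j) + (cr S (ends i) + (\<Sum>e\<in>E - {j} - {i}. cr S (ends e)))"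
    proof -
      have "dc E ends S = cr S (ends j) + (\<Sum>e\<in>E - {j}. cr S (ends e))"
        unfolding dc_sum[OF fE] by (rule sum.remove[OF fE iE(2)])
      moreover have "(\<Sum>e\<in>E - {j}. cr S (ends e)) = cr S (ends i) + (\<Sum>e\<in>E - {j} - {i}. cr S (ends e))"
        using sum.remove[OF fE' iE'] unfolding E'_def .
      ultimately show ?thesis by simp
    qed
    have b: "dc E' n' S = cr S (n' i) + (\<Sum>e\<in>E - {j} - {i}. cr S (n' e))"
      unfolding dc_sum[OF fE'] using sum.remove[OF fE' iE'] unfolding E'_def .
    have c: "(\<Sum>e\<in>E - {j} - {i}. cr S (n' e)) = (\<Sum>e\<in>E - {j} - {i}. cr S (ends e))"
      by (rule sum.cong) (auto simp: n'_def)
    have "n' i = {t i, t j}" unfolding n'_def by simp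
    then show ?thesis using a b c lift_pt[OF sS, of "t i" "t j"] endsi by simp
  qed
  have symm': "dc E' n' (V - S) = dc E' n' S" if "S \<subseteq> V" for S
    using dc_compl[of E' n' V S] ed' that by blast
  show ?thesis
  proof
    assume ad: "admissible V E ends s A l i j"
    show "\<not> dang i j"
    proof
      assume "dang i j"
      then obtain X where X: "X \<subseteq> V - {s}" "X \<inter> A \<noteq> {}" "A - X \<noteq> {}" "t i \<in> X" "t j \<in> X" "dc E ends X \<le> l + 1"
        using dangE by blast
      obtain x y where xy: "x \<in> X" "x \<in> A" "y \<in> A" "y \<notin> X" using X(2,3) by blast
      have xyV: "x \<in> V - {s}" "y \<in> V - {s}" "x \<noteq> y" using xy AV sA by auto
      then have "edge_conn V E' n' x y \<ge> tau A l x y" using ad adm by blast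
      then have "l \<le> edge_conn V E' n' x y" using xy unfolding tau_def by simp
      then have "l \<le> dc E' n' X" using conn_iff[OF fV fE' ed', of x y l] xyV xy X(1) by blast
      moreover have "dc E' n' X + 2 = dc E ends X" using dcrel[of X] X(1,4,5) by auto
      ultimately show False using X(6) by linarith
    qed
  next
    assume nd: "\<not> dang i j"
    show "admissible V E ends s A l i j"
      unfolding adm
    proof (intro ballI impI)
      fix x y assume xV: "x \<in> V - {s}" and yV: "y \<in> V - {s}" and xy: "x \<noteq> y"
      show "tau A l x y \<le> edge_conn V E' n' x y"
      proof (cases "x \<in> A \<and> y \<in> A")
        case False then show ?thesis unfolding tau_def by auto
      next
        case True
        have "\<forall>S. S \<subseteq> V \<longrightarrow> x \<in> S \<longrightarrow> y \<notin> S \<longrightarrow> l \<le> dc E' n' S"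
        proof (intro allI impI)
          fix S assume S: "S \<subseteq> V" "x \<in> S" "y \<notin> S"
          define S2 where "S2 = (if s \<in> S then V - S else S)"
          have S2V: "S2 \<subseteq> V" unfolding S2_def using S by auto
          have sS2: "s \<notin> S2" unfolding S2_def by auto
          have S2A: "S2 \<inter> A \<noteq> {}" "A - S2 \<noteq> {}" unfolding S2_def using S True xV yV by auto
          have eq: "dc E' n' S2 = dc E' n' S" unfolding S2_def using symm' S(1) by simp
          have ge: "l \<le> dc E ends S2" using conn S2V S2A by blast
          note r = dcrel[OF sS2]
          show "l \<le> dc E' n' S"
          proof (cases "t i \<in> S2 \<and> t j \<in> S2")
            case True
            have "\<not> dc E ends S2 \<le> l + 1"
            proof
              assume "dc E ends S2 \<le> l + 1"
              then have "dang i j" unfolding dang_def using S2V sS2 S2A True by blast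
              then show False using nd by blast
            qed
            then show ?thesis using r True eq by simp
          next
            case False
            have "(if t i \<in> S2 \<and> t j \<in> S2 then 1 else 0) = (0::nat)" using if_not_P[OF False] .
            then show ?thesis using r ge eq by linarith
          qed
        qed
        then have "l \<le> edge_conn V E' n' x y" using conn_iff[OF fV fE' ed', of x y l] xV yV xy by blast
        then show ?thesis unfolding tau_def using True by simp
      qed
    qed
  qed
qed

end

lemma card4: assumes "card S = 4" obtains a b c d where "S = {a,b,c,d}" "distinct [a,b,c,d]"
proof -
  have "card S = Suc (Suc (Suc (Suc 0)))" using assms by simp
  from card_eq_SucD[OF this] obtain a S1 where 1: "S = insert a S1" "a \<notin> S1" "card S1 = Suc (Suc (Suc 0))" by blast
  from card_eq_SucD[OF 1(3)] obtain b S2 where 2: "S1 = insert b S2" "b \<notin> S2" "card S2 = Suc (Suc 0)" by blast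
  from card_eq_SucD[OF 2(3)] obtain c S3 where 3: "S2 = insert c S3" "c \<notin> S3" "card S3 = Suc 0" by blast
  from 3(3) obtain d where 4: "S3 = {d}" using card_1_singletonE by (metis One_nat_def)
  show ?thesis using that[of a b c d] 1 2 3 4 by auto
qed

context LS begin

lemma final:
  "(is_K4 inc (admissible V E ends s A l) \<or> is_K22 inc (admissible V E ends s A l) \<or> is_2K2 inc (admissible V E ends s A l))
   \<and> (is_2K2 inc (admissible V E ends s A l) \<longrightarrow> odd l)"
proof -
  let ?R = "admissible V E ends s A l"
  obtain a b c d where abcd: "inc = {a,b,c,d}" "distinct [a,b,c,d]" using card4[OF deg] by blast
  have mem: "a \<in> inc" "b \<in> inc" "c \<in> inc" "d \<in> inc" using abcd by auto
  have R: "?R u v \<longleftrightarrow> \<not> dang u v" if "u \<in> inc" "v \<in> inc" "u \<noteq> v" for u v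
    using adm_iff that by blast
  have sw: "{c,d,a,b} = inc" "{b,d,a,c} = inc" "{a,c,b,d} = inc" "{a,d,b,c} = inc" "{b,c,a,d} = inc"
    using abcd by auto
  have q1: "dang c d \<longleftrightarrow> dang a b"
    using compl_dang[OF abcd(1) abcd(2)] compl_dang[OF sw(1)[symmetric]] abcd(2) by auto
  have q2: "dang b d \<longleftrightarrow> dang a c"
    using compl_dang[OF sw(3)[symmetric]] compl_dang[OF sw(2)[symmetric]] abcd(2) by auto
  have q3: "dang b c \<longleftrightarrow> dang a d"
    using compl_dang[OF sw(4)[symmetric]] compl_dang[OF sw(5)[symmetric]] abcd(2) by auto
  have nall: "\<not> (dang a b \<and> dang a c \<and> dang a d)" using three_dang_false[OF abcd] by blast
  have dist: "a \<noteq> b" "a \<noteq> c" "a \<noteq> d" "b \<noteq> c" "b \<noteq> d" "c \<noteq> d" using abcd(2) by auto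
  have Rab: "?R a b \<longleftrightarrow> \<not> dang a b" "?R b a \<longleftrightarrow> \<not> dang a b" "?R c d \<longleftrightarrow> \<not> dang a b" "?R d c \<longleftrightarrow> \<not> dang a b"
    using R mem dist q1 dang_sym by metis+
  have Rac: "?R a c \<longleftrightarrow> \<not> dang a c" "?R c a \<longleftrightarrow> \<not> dang a c" "?R b d \<longleftrightarrow> \<not> dang a c" "?R d b \<longleftrightarrow> \<not> dang a c"
    using R mem dist q2 dang_sym by metis+
  have Rad: "?R a d \<longleftrightarrow> \<not> dang a d" "?R d a \<longleftrightarrow> \<not> dang a d" "?R b c \<longleftrightarrow> \<not> dang a d" "?R c b \<longleftrightarrow> \<not> dang a d"
    using R mem dist q3 dang_sym by metis+
  note RR = Rab Rac Rad
  have part1: "is_K4 inc ?R \<or> is_K22 inc ?R \<or> is_2K2 inc ?R"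
  proof (cases "dang a b"; cases "dang a c"; cases "dang a d")
    assume "dang a b" "dang a c" "dang a d" then show ?thesis using nall by blast
  next
    assume h: "dang a b" "dang a c" "\<not> dang a d"
    have "is_2K2 inc ?R" unfolding is_2K2_def
      by (rule exI[of _ a], rule exI[of _ d], rule exI[of _ b], rule exI[of _ c]) (use abcd dist h RR in \<open>auto simp: doubleton_eq_iff\<close>)
    then show ?thesis by blast
  next
    assume h: "dang a b" "\<not> dang a c" "dang a d"
    have "is_2K2 inc ?R" unfolding is_2K2_def
      by (rule exI[of _ a], rule exI[of _ c], rule exI[of _ b], rule exI[of _ d]) (use abcd dist h RR in \<open>auto simp: doubleton_eq_iff\<close>)
    then show ?thesis by blast
  next
    assume h: "dang a b" "\<not> dang a c" "\<not> dang a d"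
    have "is_K22 inc ?R" unfolding is_K22_def
      by (rule exI[of _ a], rule exI[of _ b], rule exI[of _ c], rule exI[of _ d]) (use abcd dist h RR in \<open>auto simp: doubleton_eq_iff\<close>)
    then show ?thesis by blast
  next
    assume h: "\<not> dang a b" "dang a c" "dang a d"
    have "is_2K2 inc ?R" unfolding is_2K2_def
      by (rule exI[of _ a], rule exI[of _ b], rule exI[of _ c], rule exI[of _ d]) (use abcd dist h RR in \<open>auto simp: doubleton_eq_iff\<close>)
    then show ?thesis by blast
  next
    assume h: "\<not> dang a b" "dang a c" "\<not> dang a d"
    have "is_K22 inc ?R" unfolding is_K22_def
      by (rule exI[of _ a], rule exI[of _ c], rule exI[of _ b], rule exI[of _ d]) (use abcd dist h RR in \<open>auto simp: doubleton_eq_iff\<close>)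
    then show ?thesis by blast
  next
    assume h: "\<not> dang a b" "\<not> dang a c" "dang a d"
    have "is_K22 inc ?R" unfolding is_K22_def
      by (rule exI[of _ a], rule exI[of _ d], rule exI[of _ b], rule exI[of _ c]) (use abcd dist h RR in \<open>auto simp: doubleton_eq_iff\<close>)
    then show ?thesis by blast
  next
    assume h: "\<not> dang a b" "\<not> dang a c" "\<not> dang a d"
    have "is_K4 inc ?R" unfolding is_K4_def using abcd dist h RR deg by auto
    then show ?thesis by blast
  qed
  have part2: "is_2K2 inc ?R \<longrightarrow> odd l"
  proof
    assume "is_2K2 inc ?R"
    then obtain a' b' c' d' where h: "distinct [a',b',c',d']" "inc = {a',b',c',d'}"
      "\<forall>u\<in>inc. \<forall>v\<in>inc. u \<noteq> v \<longrightarrow> (?R u v \<longleftrightarrow> ({u,v} = {a',b'} \<or> {u,v} = {c',d'}))"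
      unfolding is_2K2_def by (elim exE conjE) (rule that; assumption)
    have m': "a' \<in> inc" "c' \<in> inc" "d' \<in> inc" using h(2) by auto
    have "\<not> ?R a' c'" using h(3) m' h(1) by (auto simp: doubleton_eq_iff)
    then have d1: "dang a' c'" using R m' h(1) by auto
    have "\<not> ?R a' d'" using h(3) m' h(1) by (auto simp: doubleton_eq_iff)
    then have d2: "dang a' d'" using R m' h(1) by auto
    have "inc = {a',c',d',b'}" using h(2) by auto
    moreover have "distinct [a',c',d',b']" using h(1) by auto
    ultimately show "odd l" using two_dang_odd d1 d2 by blast
  qed
  show ?thesis using part1 part2 by blast
qed

end

theorem proposition4p4:
  fixes V :: "'v set" and E :: "'e set" and ends :: "'e \<Rightarrow> 'v set"
    and l :: nat and s :: 'v and A :: "'v set"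
  assumes "multigraph V E ends"
    and "l \<ge> 4"
    and "s \<in> V"
    and "A \<subset> V" and "s \<notin> A"
    and "\<forall>x\<in>A. \<forall>y\<in>A. x \<noteq> y \<longrightarrow> edge_conn V E ends x y \<ge> l"
    and "\<forall>e\<in>E. ends e \<inter> A \<noteq> {}"
    and "card (incident_edges E ends s) = 4"
  shows "(is_K4 (incident_edges E ends s) (admissible V E ends s A l)
          \<or> is_K22 (incident_edges E ends s) (admissible V E ends s A l)
          \<or> is_2K2 (incident_edges E ends s) (admissible V E ends s A l))
       \<and> (is_2K2 (incident_edges E ends s) (admissible V E ends s A l) \<longrightarrow> odd l)"
proof -
  have "LS V E ends s A l"
    by (unfold_locales) (use assms in auto)
  then show ?thesis by (rule LS.final)
qed

end
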